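(* Let the matrices $E^{(0,0,0)},E^{(1,0,0)},E^{(0,1,0)},E^{(0,0,1)},D^{(1,0,0)},D^{(0,1,0)},D^{(0,0,1)},D^{(0)}$ be as in the context. Then for every $\mathbf f\in\mathbb R^{n_0}$: (a) $D^{(1,0,0)}(E^{(0,0,0)})^T\mathbf f=(E^{(1,0,0)})^TD^{(0)}\mathbf f$; (b) $D^{(0,1,0)}(E^{(0,0,0)})^T\mathbf f=(E^{(0,1,0)})^TD^{(0)}\mathbf f$; (c) $D^{(0,0,1)}(E^{(0,0,0)})^T\mathbf f=(E^{(0,0,1)})^TD^{(0)}\mathbf f$.
   Context: Fix integers $n^r,n^s,n^t$ (large enough for all index ranges to make sense). Put $\bar n_0=n^r(n^s-2)+3$, $\bar n_1=2n^r(n^s-2)+2$, $n_0=n^t\bar n_0$, $n_1=n^t(\bar n_0+\bar n_1)$. Let $\theta_i=2\pi+\frac{(1-2i)\pi}{n^r}$. Let $\bar E$ be the $3\times 2n^r$ matrix with columns indexed by $(1,1),\dots,(n^r,1),(1,2),\dots,(n^r,2)$ and entries $\bar E_{\ell,(i,1)}=\tfrac13$, $\bar E_{1,(i,2)}=\tfrac13+\tfrac13\cos\theta_i$, $\bar E_{2,(i,2)}=\tfrac13-\tfrac16\cos\theta_i+\tfrac{\sqrt3}{6}\sin\theta_i$, $\bar E_{3,(i,2)}=\tfrac13-\tfrac16\cos\theta_i-\tfrac{\sqrt3}{6}\sin\theta_i$; set $\bar E_{\ell,(n^r+1,2)}:=\bar E_{\ell,(1,2)}$. Let $E^{(0)}=\begin{bmatrix}\bar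 E&0\\0&I_{n^r(n^s-2)}\end{bmatrix}$ (size $\bar n_0\times n^rn^s$, columns indexed by $i+(j-1)n^r$). Let $E^{(1,0)}$ ($\bar n_1\times n^rn^s$) be given by $y=E^{(1,0)}x$: $y_\ell=\sum_{i=1}^{n^r}(\bar E_{\ell+1,(i+1,2)}-\bar E_{\ell+1,(i,2)})x_{i+n^r}$ ($\ell=1,2$), and for $j=3,\dots,n^s$, $i=1,\dots,n^r$: $y_{2+i+(2j-6)n^r}=0$, $y_{2+i+(2j-5)n^r}=x_{i+(j-1)n^r}$. Let $E^{(0,1)}$ ($\bar n_1\times n^r(n^s-1)$) be given by $y=E^{(0,1)}x$: $y_\ell=\sum_{i=1}^{n^r}(\bar E_{\ell+1,(i,2)}-\bar E_{\ell+1,(i,1)})x_i$ ($\ell=1,2$), and for $j=2,\dots,n^s-1$, $i=1,\dots,n^r$: $y_{2+i+(2j-4)n^r}=x_{i+(j-1)n^r}$, $y_{2+i+(2j-3)n^r}=0$. With $[A;B]$ denoting vertical stacking and $0_{a\times b}$ zero matrices, set $E^{(0,0,0)}=I_{n^t}\otimes E^{(0)}$, $E^{(1,0,0)}=I_{n^t}\otimes[E^{(1,0)};0_{\bar n_0\times n^rn^s}]$, $E^{(0,1,0)}=I_{n^t}\otimes[E^{(0,1)};0_{\bar n_0\times n^r(n^s-1)}]$, $E^{(0,0,1)}=I_{n^t}\otimes[0_{\bar n_1\times n^rn^s};E^{(0)}]$. Difference matrices: $\mathfrak D_q$ is the $(q-1)\times q$ matrix with row $j$ having $-1$ in column $j$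 and $1$ in column $j+1$; $\mathfrak D_{q,\mathrm{per}}$ is the $q\times q$ matrix with row $j$ having $-1$ in column $j$ and $1$ in column $j+1$ for $j<q$, and last row having $1$ in column $1$ and $-1$ in column $q$. Set $D^{(1,0,0)}=I_{n^t}\otimes I_{n^s}\otimes\mathfrak D_{n^r,\mathrm{per}}$, $D^{(0,1,0)}=I_{n^t}\otimes\mathfrak D_{n^s}\otimes I_{n^r}$, $D^{(0,0,1)}=\mathfrak D_{n^t,\mathrm{per}}\otimes I_{n^s}\otimes I_{n^r}$. $D^{(0)}$ is the $n_1\times n_0$ matrix with $\mathbf g=D^{(0)}\mathbf f$ given, for each $k=1,\dots,n^t$, with $a=(k-1)\bar n_0$ and $b=(k-1)(\bar n_0+\bar n_1)$, by: $g_{1+b}=f_{2+a}-f_{1+a}$; $g_{2+b}=f_{3+a}-f_{1+a}$; for $i=1,\dots,n^r$: $g_{2+i+b}=f_{3+i+a}-\sum_{\ell=1}^3\bar E_{\ell,(i,2)}f_{\ell+a}$; for $j=3,\dots,n^s-1$, $i=1,\dots,n^r$: $g_{2+i+(2j-5)n^r+b}=f_{3+\sigma(i)+(j-3)n^r+a}-f_{3+i+(j-3)n^r+a}$ and $g_{2+i+(2j-4)n^r+b}=f_{3+i+(j-2)n^r+a}-f_{3+i+(j-3)n^r+a}$; for $i=1,\dots,n^r$: $g_{2+i+(2n^s-5)n^r+b}=f_{3+\sigma(i)+(n^s-3)n^r+a}-f_{3+i+(n^s-3)n^r+a}$; for $i=1,\dots,\bar n_0$: $g_{i+k\bar n_1+(k-1)\bar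 n_0}=f_{i+k\bar n_0}-f_{i+(k-1)\bar n_0}$, with the convention $f_{n^t\bar n_0+i}:=f_i$. Here $\sigma(i)=i+1$ for $i<n^r$ and $\sigma(n^r)=1$. *)

theory Defs
  imports Complex_Main
begin

text \<open>All vectors and matrices are 1-based.
  A vector of length m is a function v :: nat \<Rightarrow> real, only the entries v 1, ..., v m matter.
  A matrix with m rows and n columns is a function A :: nat \<Rightarrow> nat \<Rightarrow> real,
  A i j being the entry in row i and column j (1 \<le> i \<le> m, 1 \<le> j \<le> n).
  The parameters nr, ns, nt stand for n^r, n^s, n^t.\<close>

definition mat_vec :: "nat \<Rightarrow> (nat \<Rightarrow> nat \<Rightarrow> real) \<Rightarrow> (nat \<Rightarrow> real) \<Rightarrow> nat \<Rightarrow> real" where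
  "mat_vec n A x = (\<lambda>i. \<Sum>j=1..n. A i j * x j)"

definition tmat_vec :: "nat \<Rightarrow> (nat \<Rightarrow> nat \<Rightarrow> real) \<Rightarrow> (nat \<Rightarrow> real) \<Rightarrow> nat \<Rightarrow> real" where
  "tmat_vec m A y = (\<lambda>j. \<Sum>i=1..m. A i j * y i)"

text \<open>Kronecker product A \<otimes> B where B has r rows and s columns.\<close>
definition kron :: "nat \<Rightarrow> nat \<Rightarrow> (nat \<Rightarrow> nat \<Rightarrow> real) \<Rightarrow> (nat \<Rightarrow> nat \<Rightarrow> real) \<Rightarrow> nat \<Rightarrow> nat \<Rightarrow> real" where
  "kron r s A B = (\<lambda>I J. A ((I - 1) div r + 1) ((J - 1) div s + 1) * B ((I - 1) mod r + 1) ((J - 1) mod s + 1))"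

definition vstack :: "nat \<Rightarrow> (nat \<Rightarrow> nat \<Rightarrow> real) \<Rightarrow> (nat \<Rightarrow> nat \<Rightarrow> real) \<Rightarrow> nat \<Rightarrow> nat \<Rightarrow> real" where
  "vstack m A B = (\<lambda>i j. if i \<le> m then A i j else B (i - m) j)"

definition idm :: "nat \<Rightarrow> nat \<Rightarrow> real" where
  "idm = (\<lambda>i j. if i = j then 1 else 0)"

definition zerom :: "nat \<Rightarrow> nat \<Rightarrow> real" where
  "zerom = (\<lambda>i j. 0)"

text \<open>Difference matrices \<open>\<DD>_q\<close> (size (q-1) x q) and \<open>\<DD>_{q,per}\<close> (size q x q).\<close>
definition diffm :: "nat \<Rightarrow> nat \<Rightarrow> real" where
  "diffm = (\<lambda>i j. (if j = i then -1 else 0) + (if j = i + 1 then 1 else 0))"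

definition diffm_per :: "nat \<Rightarrow> nat \<Rightarrow> nat \<Rightarrow> real" where
  "diffm_per q = (\<lambda>i j. if i < q then (if j = i then -1 else 0) + (if j = i + 1 then 1 else 0)
                        else (if j = 1 then 1 else 0) + (if j = q then -1 else 0))"

definition bn0 :: "nat \<Rightarrow> nat \<Rightarrow> nat" where "bn0 nr ns = nr * (ns - 2) + 3"
definition bn1 :: "nat \<Rightarrow> nat \<Rightarrow> nat" where "bn1 nr ns = 2 * nr * (ns - 2) + 2"
definition n0 :: "nat \<Rightarrow> nat \<Rightarrow> nat \<Rightarrow> nat" where "n0 nr ns nt = nt * bn0 nr ns"
definition n1 :: "nat \<Rightarrow> nat \<Rightarrow> nat \<Rightarrow> nat" where "n1 nr ns nt = nt * (bn0 nr ns + bn1 nr ns)"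

definition theta :: "nat \<Rightarrow> nat \<Rightarrow> real" where
  "theta nr i = 2 * pi + (1 - 2 * real i) * pi / real nr"

definition Ebar2 :: "nat \<Rightarrow> nat \<Rightarrow> nat \<Rightarrow> real" where
  "Ebar2 nr l i0 = (let i = (if i0 = nr + 1 then 1 else i0) in
     if l = 1 then 1/3 + 1/3 * cos (theta nr i)
     else if l = 2 then 1/3 - 1/6 * cos (theta nr i) + sqrt 3 / 6 * sin (theta nr i)
     else 1/3 - 1/6 * cos (theta nr i) - sqrt 3 / 6 * sin (theta nr i))"

definition Ebar1 :: "nat \<Rightarrow> nat \<Rightarrow> real" where
  "Ebar1 l i = 1/3"

text \<open>The 3 x 2nr matrix \<open>\<bar>E\<close>; column c = i for (i,1) and c = nr + i for (i,2).\<close>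
definition Ebar :: "nat \<Rightarrow> nat \<Rightarrow> nat \<Rightarrow> real" where
  "Ebar nr = (\<lambda>l c. if c \<le> nr then Ebar1 l c else Ebar2 nr l (c - nr))"

text \<open>E^(0) = diag(\<open>\<bar>E\<close>, I_{nr(ns-2)}), size bn0 x nr*ns.\<close>
definition E0 :: "nat \<Rightarrow> nat \<Rightarrow> nat \<Rightarrow> real" where
  "E0 nr = (\<lambda>a c. if a \<le> 3 \<and> c \<le> 2 * nr then Ebar nr a c
                 else if 3 < a \<and> 2 * nr < c then (if a - 3 = c - 2 * nr then 1 else 0)
                 else 0)"

definition E10 :: "nat \<Rightarrow> nat \<Rightarrow> nat \<Rightarrow> nat \<Rightarrow> real" where
  "E10 nr ns = (\<lambda>r c.
     (if (r = 1 \<or> r = 2) \<and> nr < c \<and> c \<le> 2 * nr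
      then Ebar2 nr (r + 1) (c - nr + 1) - Ebar2 nr (r + 1) (c - nr) else 0)
     + (\<Sum>j=3..ns. \<Sum>i=1..nr.
          if r = 2 + i + (2 * j - 5) * nr \<and> c = i + (j - 1) * nr then 1 else 0))"

definition E01 :: "nat \<Rightarrow> nat \<Rightarrow> nat \<Rightarrow> nat \<Rightarrow> real" where
  "E01 nr ns = (\<lambda>r c.
     (if (r = 1 \<or> r = 2) \<and> 1 \<le> c \<and> c \<le> nr
      then Ebar2 nr (r + 1) c - Ebar1 (r + 1) c else 0)
     + (\<Sum>j=2..ns-1. \<Sum>i=1..nr.
          if r = 2 + i + (2 * j - 4) * nr \<and> c = i + (j - 1) * nr then 1 else 0))"

definition E000 :: "nat \<Rightarrow> nat \<Rightarrow> nat \<Rightarrow> nat \<Rightarrow> real" where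
  "E000 nr ns = kron (bn0 nr ns) (nr * ns) idm (E0 nr)"

definition E100 :: "nat \<Rightarrow> nat \<Rightarrow> nat \<Rightarrow> nat \<Rightarrow> real" where
  "E100 nr ns = kron (bn1 nr ns + bn0 nr ns) (nr * ns) idm (vstack (bn1 nr ns) (E10 nr ns) zerom)"

definition E010 :: "nat \<Rightarrow> nat \<Rightarrow> nat \<Rightarrow> nat \<Rightarrow> real" where
  "E010 nr ns = kron (bn1 nr ns + bn0 nr ns) (nr * (ns - 1)) idm (vstack (bn1 nr ns) (E01 nr ns) zerom)"

definition E001 :: "nat \<Rightarrow> nat \<Rightarrow> nat \<Rightarrow> nat \<Rightarrow> real" where
  "E001 nr ns = kron (bn1 nr ns + bn0 nr ns) (nr * ns) idm (vstack (bn1 nr ns) zerom (E0 nr))"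

definition D100 :: "nat \<Rightarrow> nat \<Rightarrow> nat \<Rightarrow> nat \<Rightarrow> real" where
  "D100 nr ns = kron (ns * nr) (ns * nr) idm (kron nr nr idm (diffm_per nr))"

definition D010 :: "nat \<Rightarrow> nat \<Rightarrow> nat \<Rightarrow> nat \<Rightarrow> real" where
  "D010 nr ns = kron ((ns - 1) * nr) (ns * nr) idm (kron nr nr diffm idm)"

definition D001 :: "nat \<Rightarrow> nat \<Rightarrow> nat \<Rightarrow> nat \<Rightarrow> nat \<Rightarrow> real" where
  "D001 nr ns nt = kron (ns * nr) (ns * nr) (diffm_per nt) (kron nr nr idm idm)"

definition sigma :: "nat \<Rightarrow> nat \<Rightarrow> nat" where
  "sigma nr i = (if i < nr then i + 1 else 1)"

text \<open>The vector g = D^(0) f, of length n1, written as a sum over the defining equations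
  (each row index occurs in exactly one equation; the convention f_{nt*bn0+i} := f_i is
  implemented by \<open>fw\<close>).\<close>
definition D0 :: "nat \<Rightarrow> nat \<Rightarrow> nat \<Rightarrow> (nat \<Rightarrow> real) \<Rightarrow> nat \<Rightarrow> real" where
  "D0 nr ns nt f = (\<lambda>r.
     let b0 = bn0 nr ns; b1 = bn1 nr ns;
         fw = (\<lambda>x. if x \<le> nt * b0 then f x else f (x - nt * b0))
     in \<Sum>k=1..nt. let a = (k - 1) * b0; b = (k - 1) * (b0 + b1) in
        (if r = 1 + b then fw (2 + a) - fw (1 + a) else 0)
      + (if r = 2 + b then fw (3 + a) - fw (1 + a) else 0)
      + (\<Sum>i=1..nr. if r = 2 + i + b
           then fw (3 + i + a) - (\<Sum>l=1..3. Ebar2 nr l i * fw (l + a)) else 0)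
      + (\<Sum>j=3..ns-1. \<Sum>i=1..nr.
           (if r = 2 + i + (2 * j - 5) * nr + b
            then fw (3 + sigma nr i + (j - 3) * nr + a) - fw (3 + i + (j - 3) * nr + a) else 0)
         + (if r = 2 + i + (2 * j - 4) * nr + b
            then fw (3 + i + (j - 2) * nr + a) - fw (3 + i + (j - 3) * nr + a) else 0))
      + (\<Sum>i=1..nr. if r = 2 + i + (2 * ns - 5) * nr + b
           then fw (3 + sigma nr i + (ns - 3) * nr + a) - fw (3 + i + (ns - 3) * nr + a) else 0)
      + (\<Sum>i=1..b0. if r = i + k * b1 + (k - 1) * b0
           then fw (i + k * b0) - fw (i + (k - 1) * b0) else 0))"

end

theory Submission
  imports Defs
begin



lemma sum_blocks: "(\<Sum>x=1..n*m. h x) = (\<Sum>k=1..n. \<Sum>c=1..m. h((k-1)*m + c))" for n m :: nat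
proof (induction n)
  case 0 then show ?case by simp
next
  case (Suc n)
  have "(\<Sum>x=1..Suc n*m. h x) = (\<Sum>x=1..n*m + m. h x)" by (simp add: add.commute)
  also have "\<dots> = (\<Sum>x=1..n*m. h x) + (\<Sum>x=n*m+1..n*m + m. h x)"
    by (rule sum.ub_add_nat) simp
  also have "(\<Sum>x=n*m+1..n*m + m. h x) = (\<Sum>c=1..m. h(n*m + c))"
    using sum.shift_bounds_cl_nat_ivl[of h 1 "n*m" m] by (simp add: add.commute)
  finally show ?case using Suc by simp
qed

lemma kdiv: "1\<le>c \<Longrightarrow> c\<le>s \<Longrightarrow> ((k-1)*s + c - 1) div s = k - 1" for k c s :: nat
  by (cases c) (auto simp: mult.commute)

lemma kmod: "1\<le>c \<Longrightarrow> c\<le>s \<Longrightarrow> ((k-1)*s + c - 1) mod s = c - 1" for k c s :: nat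
  by (cases c) (auto simp: mult.commute)

lemma kron_at: "1\<le>k \<Longrightarrow> 1\<le>k' \<Longrightarrow> 1\<le>\<rho> \<Longrightarrow> \<rho>\<le>r \<Longrightarrow> 1\<le>c \<Longrightarrow> c\<le>s \<Longrightarrow>
   kron r s A B ((k-1)*r + \<rho>) ((k'-1)*s + c) = A k k' * B \<rho> c"
  unfolding kron_def using kdiv[of \<rho> r k] kmod[of \<rho> r k] kdiv[of c s k'] kmod[of c s k'] by simp

lemma decomp: "x \<in> {1..n*m} \<Longrightarrow> \<exists>k c. 1\<le>k \<and> k\<le>n \<and> 1\<le>c \<and> c\<le>m \<and> x = (k-1)*m + c" for x n m :: nat
proof -
  assume a: "x \<in> {1..n*m}"
  hence m: "m > 0" by (auto intro: ccontr)
  define k where "k = (x-1) div m + 1"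
  define c where "c = (x-1) mod m + 1"
  have "x - 1 = m * ((x-1) div m) + (x-1) mod m" by simp
  hence "x = (k-1)*m + c" using a by (simp add: k_def c_def mult.commute)
  moreover have "c \<le> m" using m unfolding c_def by (simp add: Suc_le_eq)
  moreover have "k \<le> n"
  proof -
    have "x - 1 < n*m" using a by auto
    hence "(x-1) div m < n" using m by (simp add: div_less_iff_less_mult)
    thus ?thesis by (simp add: k_def)
  qed
  ultimately show ?thesis by (intro exI[of _ k] exI[of _ c]) (simp add: k_def c_def)
qed

lemma tkron: assumes "1\<le>k" "k\<le>n" "1\<le>c" "c\<le>s"
  shows "tmat_vec (n*r) (kron r s idm B) y ((k-1)*s + c) = (\<Sum>\<rho>=1..r. B \<rho> c * y((k-1)*r+\<rho>))"
proof -
  have "tmat_vec (n*r) (kron r s idm B) y ((k-1)*s + c)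
      = (\<Sum>k'=1..n. \<Sum>\<rho>=1..r. kron r s idm B ((k'-1)*r+\<rho>) ((k-1)*s + c) * y((k'-1)*r+\<rho>))"
    unfolding tmat_vec_def by (rule sum_blocks)
  also have "\<dots> = (\<Sum>k'=1..n. if k' = k then (\<Sum>\<rho>=1..r. B \<rho> c * y((k'-1)*r+\<rho>)) else 0)"
  proof (rule sum.cong[OF refl])
    fix k' assume k': "k' \<in> {1..n}"
    have "(\<Sum>\<rho>=1..r. kron r s idm B ((k'-1)*r+\<rho>) ((k-1)*s + c) * y((k'-1)*r+\<rho>))
        = (\<Sum>\<rho>=1..r. idm k' k * B \<rho> c * y((k'-1)*r+\<rho>))"
      by (rule sum.cong[OF refl], subst kron_at, use assms k' in auto)
    also have "\<dots> = (if k' = k then (\<Sum>\<rho>=1..r. B \<rho> c * y((k'-1)*r+\<rho>)) else 0)"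
      by (simp add: idm_def)
    finally show "(\<Sum>\<rho>=1..r. kron r s idm B ((k'-1)*r+\<rho>) ((k-1)*s + c) * y((k'-1)*r+\<rho>)) = (if k' = k then (\<Sum>\<rho>=1..r. B \<rho> c * y((k'-1)*r+\<rho>)) else 0)" .
  qed
  also have "\<dots> = (\<Sum>\<rho>=1..r. B \<rho> c * y((k-1)*r+\<rho>))"
    using assms by (simp add: sum.delta)
  finally show ?thesis .
qed

lemma mkron: assumes "1\<le>k" "1\<le>c" "c\<le>r"
  shows "mat_vec (n*s) (kron r s A B) x ((k-1)*r + c) = (\<Sum>k'=1..n. A k k' * (\<Sum>c'=1..s. B c c' * x((k'-1)*s+c')))"
proof -
  have "mat_vec (n*s) (kron r s A B) x ((k-1)*r + c)
      = (\<Sum>k'=1..n. \<Sum>c'=1..s. kron r s A B ((k-1)*r + c) ((k'-1)*s+c') * x((k'-1)*s+c'))"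
    unfolding mat_vec_def by (rule sum_blocks)
  also have "\<dots> = (\<Sum>k'=1..n. A k k' * (\<Sum>c'=1..s. B c c' * x((k'-1)*s+c')))"
    unfolding sum_distrib_left
    apply (rule sum.cong[OF refl])
    apply (rule sum.cong[OF refl])
    apply (subst kron_at, use assms in auto)
    done
  finally show ?thesis .
qed




lemma three_set: "{1..3::nat} = {1,2,3}" by auto

lemma sum_split: "m \<le> n \<Longrightarrow> (\<Sum>x=1..n. h x) = (\<Sum>x=1..m. h x) + (\<Sum>x=m+1..n. h x)" for m n :: nat
  using sum.ub_add_nat[of 1 m h "n-m"] by simp

lemma E0T1: assumes "1 \<le> i" "i \<le> nr"
  shows "(\<Sum>a=1..bn0 nr ns. E0 nr a i * \<phi> a) = (\<phi> 1 + \<phi> 2 + \<phi> 3)/3"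
proof -
  have "(\<Sum>a=1..bn0 nr ns. E0 nr a i * \<phi> a) = (\<Sum>a=1..3. E0 nr a i * \<phi> a) + (\<Sum>a=4..3+nr*(ns-2). E0 nr a i * \<phi> a)"
    unfolding bn0_def using sum_split[of 3 "nr * (ns - 2) + 3"] by (simp add: add.commute)
  also have "(\<Sum>a=4..3+nr*(ns-2). E0 nr a i * \<phi> a) = 0"
    using assms by (intro sum.neutral) (auto simp: E0_def)
  also have "(\<Sum>a=1..3. E0 nr a i * \<phi> a) = (\<phi> 1 + \<phi> 2 + \<phi> 3)/3"
    using assms unfolding three_set by (simp add: E0_def Ebar_def Ebar1_def)
  finally show ?thesis by simp
qed

lemma E0T2: assumes "1 \<le> i" "i \<le> nr"
  shows "(\<Sum>a=1..bn0 nr ns. E0 nr a (nr + i) * \<phi> a) = (\<Sum>l=1..3. Ebar2 nr l i * \<phi> l)"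
proof -
  have "(\<Sum>a=1..bn0 nr ns. E0 nr a (nr+i) * \<phi> a) = (\<Sum>a=1..3. E0 nr a (nr+i) * \<phi> a) + (\<Sum>a=4..3+nr*(ns-2). E0 nr a (nr+i) * \<phi> a)"
    unfolding bn0_def using sum_split[of 3 "nr * (ns - 2) + 3"] by (simp add: add.commute)
  also have "(\<Sum>a=4..3+nr*(ns-2). E0 nr a (nr+i) * \<phi> a) = 0"
    using assms by (intro sum.neutral) (auto simp: E0_def)
  also have "(\<Sum>a=1..3. E0 nr a (nr+i) * \<phi> a) = (\<Sum>l=1..3. Ebar2 nr l i * \<phi> l)"
    using assms by (intro sum.cong) (auto simp: E0_def Ebar_def)
  finally show ?thesis by simp
qed

lemma E0T3: assumes "1 \<le> i" "i \<le> nr" "j' + 3 \<le> ns"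
  shows "(\<Sum>a=1..bn0 nr ns. E0 nr a ((j'+2)*nr + i) * \<phi> a) = \<phi> (3 + i + j'*nr)"
proof -
  let ?c = "(j'+2)*nr + i"
  have "(\<Sum>a=1..bn0 nr ns. E0 nr a ?c * \<phi> a) = (\<Sum>a=1..3. E0 nr a ?c * \<phi> a) + (\<Sum>a=4..3+nr*(ns-2). E0 nr a ?c * \<phi> a)"
    unfolding bn0_def using sum_split[of 3 "nr * (ns - 2) + 3"] by (simp add: add.commute)
  also have "(\<Sum>a=1..3. E0 nr a ?c * \<phi> a) = 0"
    using assms by (intro sum.neutral) (auto simp: E0_def)
  also have "(\<Sum>a=4..3+nr*(ns-2). E0 nr a ?c * \<phi> a) = (\<Sum>a=4..3+nr*(ns-2). if a = 3 + i + j'*nr then \<phi> a else 0)"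
    using assms by (intro sum.cong) (auto simp: E0_def)
  also have "\<dots> = \<phi> (3 + i + j'*nr)"
  proof -
    have "i + j'*nr \<le> nr + j'*nr" using assms by simp
    also have "\<dots> = (j'+1)*nr" by simp
    also have "\<dots> \<le> (ns-2)*nr" using assms by (intro mult_le_mono1) simp
    finally have "3 + i + j'*nr \<in> {4..3+nr*(ns-2)}" using assms by (simp add: mult.commute)
    thus ?thesis by (simp add: sum.delta)
  qed
  finally show ?thesis by simp
qed

lemma Ebar2_sum: "Ebar2 nr 1 x + Ebar2 nr 2 x + Ebar2 nr 3 x = 1"
  by (simp add: Ebar2_def Let_def)

lemma Ebar2_wrap: "Ebar2 nr l (nr+1) = Ebar2 nr l 1"
  by (simp add: Ebar2_def Let_def)

lemma dper_sum: assumes "1 \<le> i" "i \<le> q"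
  shows "(\<Sum>i'=1..q. diffm_per q i i' * w i') = (if i < q then w (i+1) - w i else w 1 - w q)"
proof (cases "i < q")
  case True
  have "(\<Sum>i'=1..q. diffm_per q i i' * w i') = (\<Sum>i'=1..q. (if i' = i then - w i' else 0) + (if i' = i+1 then w i' else 0))"
    using True by (intro sum.cong) (auto simp: diffm_per_def)
  also have "\<dots> = w (i+1) - w i" using True assms by (simp add: sum.distrib sum.delta)
  finally show ?thesis using True by simp
next
  case False
  hence iq: "i = q" using assms by simp
  have "(\<Sum>i'=1..q. diffm_per q i i' * w i') = (\<Sum>i'=1..q. (if i' = 1 then w i' else 0) + (if i' = q then - w i' else 0))"
    using iq by (intro sum.cong) (auto simp: diffm_per_def)
  also have "\<dots> = w 1 - w q" using iq assms by (simp add: sum.distrib sum.delta)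
  finally show ?thesis using iq by simp
qed

lemma diffm_sum: assumes "1 \<le> j" "j < q"
  shows "(\<Sum>j'=1..q. diffm j j' * w j') = w (j+1) - w j"
proof -
  have "(\<Sum>j'=1..q. diffm j j' * w j') = (\<Sum>j'=1..q. (if j' = j then - w j' else 0) + (if j' = j+1 then w j' else 0))"
    by (intro sum.cong) (auto simp: diffm_def)
  also have "\<dots> = w (j+1) - w j" using assms by (simp add: sum.distrib sum.delta)
  finally show ?thesis .
qed

lemma idm_sum: assumes "1 \<le> j" "j \<le> q"
  shows "(\<Sum>j'=1..q. idm j j' * w j') = w j"
  proof -
  have "(\<Sum>j'=1..q. idm j j' * w j') = (\<Sum>j'=1..q. if j = j' then w j' else 0)"
    by (rule sum.cong) (auto simp: idm_def)
  thus ?thesis using assms by (simp add: sum.delta)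
qed

lemma idm_sum': assumes "1 \<le> j" "j \<le> q"
  shows "(\<Sum>j'=1..q. idm j j' * w j') = w j"
  proof -
  have "(\<Sum>j'=1..q. idm j j' * w j') = (\<Sum>j'=1..q. if j = j' then w j' else 0)"
    by (rule sum.cong) (auto simp: idm_def)
  thus ?thesis using assms by (simp add: sum.delta)
qed




definition fwr :: "nat \<Rightarrow> nat \<Rightarrow> (nat \<Rightarrow> real) \<Rightarrow> nat \<Rightarrow> real" where
 "fwr nt b0 f x = (if x \<le> nt * b0 then f x else f (x - nt * b0))"

definition p1 :: "nat \<Rightarrow> nat \<Rightarrow> nat \<Rightarrow> (nat \<Rightarrow> real) \<Rightarrow> nat \<Rightarrow> nat \<Rightarrow> real" where
 "p1 nr ns nt f k \<rho> = (if \<rho> = 1 then fwr nt (bn0 nr ns) f (2 + (k-1)*bn0 nr ns) - fwr nt (bn0 nr ns) f (1 + (k-1)*bn0 nr ns) else 0)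
   + (if \<rho> = 2 then fwr nt (bn0 nr ns) f (3 + (k-1)*bn0 nr ns) - fwr nt (bn0 nr ns) f (1 + (k-1)*bn0 nr ns) else 0)"

definition p3 :: "nat \<Rightarrow> nat \<Rightarrow> nat \<Rightarrow> (nat \<Rightarrow> real) \<Rightarrow> nat \<Rightarrow> nat \<Rightarrow> real" where
 "p3 nr ns nt f k \<rho> = (\<Sum>i=1..nr. if \<rho> = 2 + i then fwr nt (bn0 nr ns) f (3 + i + (k-1)*bn0 nr ns)
    - (\<Sum>l=1..3. Ebar2 nr l i * fwr nt (bn0 nr ns) f (l + (k-1)*bn0 nr ns)) else 0)"

definition p4a :: "nat \<Rightarrow> nat \<Rightarrow> nat \<Rightarrow> (nat \<Rightarrow> real) \<Rightarrow> nat \<Rightarrow> nat \<Rightarrow> real" where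
 "p4a nr ns nt f k \<rho> = (\<Sum>j=3..ns-1. \<Sum>i=1..nr. if \<rho> = 2 + i + (2*j-5)*nr then
     fwr nt (bn0 nr ns) f (3 + sigma nr i + (j-3)*nr + (k-1)*bn0 nr ns) - fwr nt (bn0 nr ns) f (3 + i + (j-3)*nr + (k-1)*bn0 nr ns) else 0)"

definition p4b :: "nat \<Rightarrow> nat \<Rightarrow> nat \<Rightarrow> (nat \<Rightarrow> real) \<Rightarrow> nat \<Rightarrow> nat \<Rightarrow> real" where
 "p4b nr ns nt f k \<rho> = (\<Sum>j=3..ns-1. \<Sum>i=1..nr. if \<rho> = 2 + i + (2*j-4)*nr then
     fwr nt (bn0 nr ns) f (3 + i + (j-2)*nr + (k-1)*bn0 nr ns) - fwr nt (bn0 nr ns) f (3 + i + (j-3)*nr + (k-1)*bn0 nr ns) else 0)"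

definition p5 :: "nat \<Rightarrow> nat \<Rightarrow> nat \<Rightarrow> (nat \<Rightarrow> real) \<Rightarrow> nat \<Rightarrow> nat \<Rightarrow> real" where
 "p5 nr ns nt f k \<rho> = (\<Sum>i=1..nr. if \<rho> = 2 + i + (2*ns-5)*nr then
     fwr nt (bn0 nr ns) f (3 + sigma nr i + (ns-3)*nr + (k-1)*bn0 nr ns) - fwr nt (bn0 nr ns) f (3 + i + (ns-3)*nr + (k-1)*bn0 nr ns) else 0)"

definition p6 :: "nat \<Rightarrow> nat \<Rightarrow> nat \<Rightarrow> (nat \<Rightarrow> real) \<Rightarrow> nat \<Rightarrow> nat \<Rightarrow> real" where
 "p6 nr ns nt f k \<rho> = (\<Sum>i=1..bn0 nr ns. if \<rho> = i + bn1 nr ns then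
     fwr nt (bn0 nr ns) f (i + k*bn0 nr ns) - fwr nt (bn0 nr ns) f (i + (k-1)*bn0 nr ns) else 0)"

definition blk :: "nat \<Rightarrow> nat \<Rightarrow> nat \<Rightarrow> (nat \<Rightarrow> real) \<Rightarrow> nat \<Rightarrow> nat \<Rightarrow> real" where
 "blk nr ns nt f k \<rho> = p1 nr ns nt f k \<rho> + p3 nr ns nt f k \<rho> + (p4a nr ns nt f k \<rho> + p4b nr ns nt f k \<rho>)
    + p5 nr ns nt f k \<rho> + p6 nr ns nt f k \<rho>"

lemma eqF: "r \<le> B \<Longrightarrow> 0 < X \<Longrightarrow> (r = X + B) = False" for r B X :: nat by simp

lemma kb: "1 \<le> k \<Longrightarrow> (r = i + k*b1 + (k-1)*b0) = (r = i + b1 + (k-1)*(b0+b1))" for k r i b0 b1 :: nat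
  by (cases k) (auto simp: algebra_simps)

lemma D0_alt: "D0 nr ns nt f r = (\<Sum>k=1..nt. if (k-1)*(bn0 nr ns + bn1 nr ns) < r
    then blk nr ns nt f k (r - (k-1)*(bn0 nr ns + bn1 nr ns)) else 0)"
  unfolding D0_def Let_def
  apply (rule sum.cong[OF refl])
  subgoal for k
  proof -
  assume "k \<in> {1..nt}"
  hence k: "1 \<le> k" by simp
  show ?thesis
  proof (cases "(k-1)*(bn0 nr ns + bn1 nr ns) < r")
    case True
    then obtain \<rho> where r: "r = \<rho> + (k-1)*(bn0 nr ns + bn1 nr ns)"
      by (metis add_diff_inverse_nat add.commute less_imp_le_nat not_less)
    show ?thesis using True unfolding blk_def p1_def p3_def p4a_def p4b_def p5_def p6_def Let_def fwr_def kb[OF k] r sum.distrib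
      by (simp only: add_right_cancel if_True diff_add_inverse2)
  next
    case False
    hence F: "r \<le> (k-1)*(bn0 nr ns + bn1 nr ns)" by simp
    show ?thesis using False unfolding kb[OF k] 
      by (simp add: eqF[OF F])
  qed
  qed
  done




lemma dig_le: "i \<le> n \<Longrightarrow> q < Q \<Longrightarrow> i + q*n \<le> Q*n" for i n q Q :: nat
proof -
  assume "i \<le> n" "q < Q"
  hence "i + q*n \<le> (q+1)*n" by simp
  also have "\<dots> \<le> Q*n" using \<open>q < Q\<close> by (intro mult_le_mono1) simp
  finally show ?thesis .
qed

lemma bn1_alt: "bn1 nr ns = 2 + (2*ns-4)*nr"
  unfolding bn1_def by (simp add: diff_mult_distrib algebra_simps)

lemma sum_if_none: "(\<And>x. x \<in> A \<Longrightarrow> \<not> P x) \<Longrightarrow> (\<Sum>x\<in>A. if P x then v x else (0::real)) = 0"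
  by (intro sum.neutral) auto

lemma sum_if_none2: "(\<And>x y. x \<in> A \<Longrightarrow> y \<in> B \<Longrightarrow> \<not> P x y) \<Longrightarrow> (\<Sum>x\<in>A. \<Sum>y\<in>B. if P x y then v x y else (0::real)) = 0"
  by (intro sum.neutral ballI) auto

lemma sum_if_one: "finite A \<Longrightarrow> a \<in> A \<Longrightarrow> (\<And>x. x \<in> A \<Longrightarrow> P x \<longleftrightarrow> x = a) \<Longrightarrow> (\<Sum>x\<in>A. if P x then v x else (0::real)) = v a"
proof -
  assume "finite A" "a \<in> A" "\<And>x. x \<in> A \<Longrightarrow> P x \<longleftrightarrow> x = a"
  hence "(\<Sum>x\<in>A. if P x then v x else (0::real)) = (\<Sum>x\<in>A. if x = a then v x else 0)"
    by (intro sum.cong) auto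
  thus ?thesis using \<open>finite A\<close> \<open>a \<in> A\<close> by (simp add: sum.delta')
qed

lemma sum_if_one2: assumes "finite A" "finite B" "a \<in> A" "b \<in> B" "\<And>x y. x \<in> A \<Longrightarrow> y \<in> B \<Longrightarrow> P x y \<longleftrightarrow> (x = a \<and> y = b)"
  shows "(\<Sum>x\<in>A. \<Sum>y\<in>B. if P x y then v x y else (0::real)) = v a b"
proof -
  have "(\<Sum>x\<in>A. \<Sum>y\<in>B. if P x y then v x y else (0::real)) = (\<Sum>x\<in>A. if x = a then v x b else 0)"
  proof (rule sum.cong[OF refl])
    fix x assume x: "x \<in> A"
    show "(\<Sum>y\<in>B. if P x y then v x y else (0::real)) = (if x = a then v x b else 0)"
    proof (cases "x = a")
      case True thus ?thesis using assms x by (simp add: sum_if_one)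
    next
      case False thus ?thesis using assms x by (simp add: sum_if_none)
    qed
  qed
  thus ?thesis using assms by (simp add: sum.delta')
qed

lemma blk_zero: assumes "ns \<ge> 3" "bn0 nr ns + bn1 nr ns < \<rho>"
  shows "blk nr ns nt f k \<rho> = 0"
proof -
  have M: "bn1 nr ns < \<rho>" using assms by simp
  have "p3 nr ns nt f k \<rho> = 0" unfolding p3_def
  proof (rule sum_if_none)
    fix i assume "i \<in> {1..nr}"
    hence "i + 0*nr \<le> (2*ns-4)*nr" using assms by (intro dig_le) auto
    thus "\<rho> \<noteq> 2 + i" using M by (simp add: bn1_alt)
  qed
  moreover have "p4a nr ns nt f k \<rho> = 0" unfolding p4a_def
  proof (rule sum_if_none2)
    fix i j assume "j \<in> {3..ns-1}" "i \<in> {1..nr}"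
    hence "i + (2*j-5)*nr \<le> (2*ns-4)*nr" using assms by (intro dig_le) auto
    thus "\<rho> \<noteq> 2 + i + (2*j-5)*nr" using M by (simp add: bn1_alt)
  qed
  moreover have "p4b nr ns nt f k \<rho> = 0" unfolding p4b_def
  proof (rule sum_if_none2)
    fix i j assume "j \<in> {3..ns-1}" "i \<in> {1..nr}"
    hence "i + (2*j-4)*nr \<le> (2*ns-4)*nr" using assms by (intro dig_le) auto
    thus "\<rho> \<noteq> 2 + i + (2*j-4)*nr" using M by (simp add: bn1_alt)
  qed
  moreover have "p5 nr ns nt f k \<rho> = 0" unfolding p5_def
  proof (rule sum_if_none)
    fix i assume "i \<in> {1..nr}"
    hence "i + (2*ns-5)*nr \<le> (2*ns-4)*nr" using assms by (intro dig_le) auto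
    thus "\<rho> \<noteq> 2 + i + (2*ns-5)*nr" using M by (simp add: bn1_alt)
  qed
  moreover have "p6 nr ns nt f k \<rho> = 0" unfolding p6_def
    by (rule sum_if_none) (use assms in auto)
  moreover have "p1 nr ns nt f k \<rho> = 0" using M unfolding p1_def by (auto simp: bn1_def)
  ultimately show ?thesis unfolding blk_def by simp
qed

lemma D0_at: assumes "ns \<ge> 3" "1 \<le> k" "k \<le> nt" "1 \<le> \<rho>" "\<rho> \<le> bn0 nr ns + bn1 nr ns"
  shows "D0 nr ns nt f ((k-1)*(bn0 nr ns + bn1 nr ns) + \<rho>) = blk nr ns nt f k \<rho>"
proof -
  let ?M = "bn0 nr ns + bn1 nr ns"
  have "D0 nr ns nt f ((k-1)*?M + \<rho>) = (\<Sum>k'=1..nt. if k' = k then blk nr ns nt f k \<rho> else 0)"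
    unfolding D0_alt
  proof (rule sum.cong[OF refl])
    fix k' assume k': "k' \<in> {1..nt}"
    show "(if (k'-1)*?M < (k-1)*?M + \<rho> then blk nr ns nt f k' ((k-1)*?M + \<rho> - (k'-1)*?M) else 0)
       = (if k' = k then blk nr ns nt f k \<rho> else 0)"
    proof (cases "k' < k")
      case True
      then obtain d where d: "k = k' + Suc d" by (metis less_imp_Suc_add add_Suc_right)
      have "(k-1)*?M + \<rho> - (k'-1)*?M = (Suc d)*?M + \<rho>" using k' unfolding d
        by (cases k') (auto simp: algebra_simps)
      moreover have "?M < (Suc d)*?M + \<rho>" using assms by simp
      ultimately show ?thesis using True assms by (simp add: blk_zero)
    next
      case False
      show ?thesis
      proof (cases "k' = k")
        case True thus ?thesis using assms by simp
      next
        case False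
        hence "k < k'" using \<open>\<not> k' < k\<close> by simp
        hence "k \<le> k' - 1" by simp
        hence "k*?M \<le> (k'-1)*?M" by (rule mult_le_mono1)
        moreover have "(k-1)*?M + \<rho> \<le> k*?M" using assms by (cases k) auto
        ultimately have "\<not> ((k'-1)*?M < (k-1)*?M + \<rho>)" by linarith
        thus ?thesis using False by simp
      qed
    qed
  qed
  also have "\<dots> = blk nr ns nt f k \<rho>" using assms by (simp add: sum.delta')
  finally show ?thesis .
qed




lemma dig_eq: fixes i n i' q q' :: nat assumes "1 \<le> i" "i \<le> n" "1 \<le> i'" "i' \<le> n"
  shows "(i + q*n = i' + q'*n) \<longleftrightarrow> (i = i' \<and> q = q')"
proof
  assume h: "i + q*n = i' + q'*n"
  obtain a a' where a: "i = Suc a" "i' = Suc a'" using assms by (cases i; cases i') auto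
  have an: "a < n" "a' < n" using assms a by auto
  have h': "a + q*n = a' + q'*n" using h a by simp
  have "(a + q*n) mod n = a" "(a' + q'*n) mod n = a'" using an by auto
  moreover have "(a + q*n) div n = q" "(a' + q'*n) div n = q'" using an by auto
  ultimately show "i = i' \<and> q = q'" using h' a by metis
qed simp

lemma low_zero: assumes "ns \<ge> 3" "bn1 nr ns < \<rho>"
  shows "p1 nr ns nt f k \<rho> = 0" "p3 nr ns nt f k \<rho> = 0" "p4a nr ns nt f k \<rho> = 0"
        "p4b nr ns nt f k \<rho> = 0" "p5 nr ns nt f k \<rho> = 0"
proof -
  note M = assms(2)
  show "p3 nr ns nt f k \<rho> = 0" unfolding p3_def
  proof (rule sum_if_none)
    fix i assume "i \<in> {1..nr}"
    hence "i + 0*nr \<le> (2*ns-4)*nr" using assms by (intro dig_le) auto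
    thus "\<rho> \<noteq> 2 + i" using M by (simp add: bn1_alt)
  qed
  show "p4a nr ns nt f k \<rho> = 0" unfolding p4a_def
  proof (rule sum_if_none2)
    fix i j assume "j \<in> {3..ns-1}" "i \<in> {1..nr}"
    hence "i + (2*j-5)*nr \<le> (2*ns-4)*nr" using assms by (intro dig_le) auto
    thus "\<rho> \<noteq> 2 + i + (2*j-5)*nr" using M by (simp add: bn1_alt)
  qed
  show "p4b nr ns nt f k \<rho> = 0" unfolding p4b_def
  proof (rule sum_if_none2)
    fix i j assume "j \<in> {3..ns-1}" "i \<in> {1..nr}"
    hence "i + (2*j-4)*nr \<le> (2*ns-4)*nr" using assms by (intro dig_le) auto
    thus "\<rho> \<noteq> 2 + i + (2*j-4)*nr" using M by (simp add: bn1_alt)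
  qed
  show "p5 nr ns nt f k \<rho> = 0" unfolding p5_def
  proof (rule sum_if_none)
    fix i assume "i \<in> {1..nr}"
    hence "i + (2*ns-5)*nr \<le> (2*ns-4)*nr" using assms by (intro dig_le) auto
    thus "\<rho> \<noteq> 2 + i + (2*ns-5)*nr" using M by (simp add: bn1_alt)
  qed
  show "p1 nr ns nt f k \<rho> = 0" using M unfolding p1_def by (auto simp: bn1_def)
qed

lemma R6: assumes "ns \<ge> 3" "1 \<le> i" "i \<le> bn0 nr ns"
  shows "blk nr ns nt f k (i + bn1 nr ns) = fwr nt (bn0 nr ns) f (i + k*bn0 nr ns) - fwr nt (bn0 nr ns) f (i + (k-1)*bn0 nr ns)"
proof -
  have "p6 nr ns nt f k (i + bn1 nr ns) = fwr nt (bn0 nr ns) f (i + k*bn0 nr ns) - fwr nt (bn0 nr ns) f (i + (k-1)*bn0 nr ns)"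
    unfolding p6_def by (rule sum_if_one) (use assms in auto)
  thus ?thesis unfolding blk_def using low_zero[of ns nr "i + bn1 nr ns"] assms by simp
qed

lemma mid_p1p6: assumes "ns \<ge> 3" "2 < \<rho>" "\<rho> \<le> bn1 nr ns"
  shows "p1 nr ns nt f k \<rho> = 0" "p6 nr ns nt f k \<rho> = 0"
  using assms unfolding p1_def p6_def by (auto intro!: sum_if_none)

lemma R12: assumes "ns \<ge> 3" "\<rho> \<in> {1,2}"
  shows "blk nr ns nt f k \<rho> = p1 nr ns nt f k \<rho>"
proof -
  have "p3 nr ns nt f k \<rho> = 0" unfolding p3_def by (rule sum_if_none) (use assms in auto)
  moreover have "p4a nr ns nt f k \<rho> = 0" unfolding p4a_def by (rule sum_if_none2) (use assms in auto)
  moreover have "p4b nr ns nt f k \<rho> = 0" unfolding p4b_def by (rule sum_if_none2) (use assms in auto)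
  moreover have "p5 nr ns nt f k \<rho> = 0" unfolding p5_def by (rule sum_if_none) (use assms in auto)
  moreover have "p6 nr ns nt f k \<rho> = 0" unfolding p6_def by (rule sum_if_none) (use assms in \<open>auto simp: bn1_def\<close>)
  ultimately show ?thesis unfolding blk_def by simp
qed

lemma R1: "ns \<ge> 3 \<Longrightarrow> blk nr ns nt f k 1 = fwr nt (bn0 nr ns) f (2 + (k-1)*bn0 nr ns) - fwr nt (bn0 nr ns) f (1 + (k-1)*bn0 nr ns)"
  by (simp add: R12 p1_def)

lemma R2: "ns \<ge> 3 \<Longrightarrow> blk nr ns nt f k 2 = fwr nt (bn0 nr ns) f (3 + (k-1)*bn0 nr ns) - fwr nt (bn0 nr ns) f (1 + (k-1)*bn0 nr ns)"
  by (simp add: R12 p1_def)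

lemma in_b1: assumes "ns \<ge> 3" "i \<le> nr" "q < 2*ns - 4" shows "2 + i + q*nr \<le> bn1 nr ns"
  using dig_le[OF assms(2,3)] by (simp add: bn1_alt)

lemma R3: assumes "ns \<ge> 3" "1 \<le> i" "i \<le> nr"
  shows "blk nr ns nt f k (2 + i) = fwr nt (bn0 nr ns) f (3 + i + (k-1)*bn0 nr ns)
    - (\<Sum>l=1..3. Ebar2 nr l i * fwr nt (bn0 nr ns) f (l + (k-1)*bn0 nr ns))"
proof -
  have b: "2 + i + 0*nr \<le> bn1 nr ns" using assms by (intro in_b1) auto
  have "p3 nr ns nt f k (2+i) = fwr nt (bn0 nr ns) f (3 + i + (k-1)*bn0 nr ns)
    - (\<Sum>l=1..3. Ebar2 nr l i * fwr nt (bn0 nr ns) f (l + (k-1)*bn0 nr ns))"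
    unfolding p3_def by (rule sum_if_one) (use assms in auto)
  moreover have "p4a nr ns nt f k (2+i) = 0" unfolding p4a_def
  proof (rule sum_if_none2)
    fix j' i' assume "j' \<in> {3..ns-1}" "i' \<in> {1..nr}"
    thus "2 + i \<noteq> 2 + i' + (2*j'-5)*nr" using dig_eq[of i nr i' 0 "2*j'-5"] assms by auto
  qed
  moreover have "p4b nr ns nt f k (2+i) = 0" unfolding p4b_def
  proof (rule sum_if_none2)
    fix j' i' assume "j' \<in> {3..ns-1}" "i' \<in> {1..nr}"
    thus "2 + i \<noteq> 2 + i' + (2*j'-4)*nr" using dig_eq[of i nr i' 0 "2*j'-4"] assms by auto
  qed
  moreover have "p5 nr ns nt f k (2+i) = 0" unfolding p5_def
  proof (rule sum_if_none)
    fix i' assume "i' \<in> {1..nr}"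
    thus "2 + i \<noteq> 2 + i' + (2*ns-5)*nr" using dig_eq[of i nr i' 0 "2*ns-5"] assms by auto
  qed
  ultimately show ?thesis unfolding blk_def using mid_p1p6[of ns "2+i"] b assms by simp
qed

lemma R4: assumes "ns \<ge> 3" "1 \<le> i" "i \<le> nr" "3 \<le> j" "j \<le> ns"
  shows "blk nr ns nt f k (2 + i + (2*j-5)*nr) = fwr nt (bn0 nr ns) f (3 + sigma nr i + (j-3)*nr + (k-1)*bn0 nr ns)
     - fwr nt (bn0 nr ns) f (3 + i + (j-3)*nr + (k-1)*bn0 nr ns)"
proof -
  let ?\<rho> = "2 + i + (2*j-5)*nr"
  let ?v = "fwr nt (bn0 nr ns) f (3 + sigma nr i + (j-3)*nr + (k-1)*bn0 nr ns)
     - fwr nt (bn0 nr ns) f (3 + i + (j-3)*nr + (k-1)*bn0 nr ns)"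
  have b: "?\<rho> \<le> bn1 nr ns" using assms by (intro in_b1) auto
  have "p3 nr ns nt f k ?\<rho> = 0" unfolding p3_def
  proof (rule sum_if_none)
    fix i' assume "i' \<in> {1..nr}"
    thus "?\<rho> \<noteq> 2 + i'" using dig_eq[of i nr i' "2*j-5" 0] assms by auto
  qed
  moreover have "p4b nr ns nt f k ?\<rho> = 0" unfolding p4b_def
  proof (rule sum_if_none2)
    fix j' i' assume "j' \<in> {3..ns-1}" "i' \<in> {1..nr}"
    moreover have "2*j-5 \<noteq> 2*j'-4" using assms \<open>j' \<in> {3..ns-1}\<close> by presburger
    ultimately show "?\<rho> \<noteq> 2 + i' + (2*j'-4)*nr" using dig_eq[of i nr i' "2*j-5" "2*j'-4"] assms by auto
  qed
  moreover have "p4a nr ns nt f k ?\<rho> + p5 nr ns nt f k ?\<rho> = ?v"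
  proof (cases "j = ns")
    case True
    have "p4a nr ns nt f k ?\<rho> = 0" unfolding p4a_def
    proof (rule sum_if_none2)
      fix j' i' assume "j' \<in> {3..ns-1}" "i' \<in> {1..nr}"
      thus "?\<rho> \<noteq> 2 + i' + (2*j'-5)*nr" using dig_eq[of i nr i' "2*j-5" "2*j'-5"] assms True by auto
    qed
    moreover have "p5 nr ns nt f k ?\<rho> = ?v" unfolding p5_def True
      by (rule sum_if_one) (use dig_eq[of i nr _ "2*j-5" "2*ns-5"] assms True in auto)
    ultimately show ?thesis by simp
  next
    case False
    have "p5 nr ns nt f k ?\<rho> = 0" unfolding p5_def
    proof (rule sum_if_none)
      fix i' assume "i' \<in> {1..nr}"
      thus "?\<rho> \<noteq> 2 + i' + (2*ns-5)*nr" using dig_eq[of i nr i' "2*j-5" "2*ns-5"] assms False by auto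
    qed
    moreover have "p4a nr ns nt f k ?\<rho> = ?v" unfolding p4a_def
    proof (rule sum_if_one2)
      fix j' i' assume "j' \<in> {3..ns-1}" "i' \<in> {1..nr}"
      thus "?\<rho> = 2 + i' + (2*j'-5)*nr \<longleftrightarrow> (j' = j \<and> i' = i)"
        using dig_eq[of i nr i' "2*j-5" "2*j'-5"] assms by auto
    qed (use assms False in auto)
    ultimately show ?thesis by simp
  qed
  ultimately show ?thesis unfolding blk_def using mid_p1p6[of ns ?\<rho>] b assms by simp
qed

lemma R5: assumes "ns \<ge> 3" "1 \<le> i" "i \<le> nr" "3 \<le> j" "j \<le> ns - 1"
  shows "blk nr ns nt f k (2 + i + (2*j-4)*nr) = fwr nt (bn0 nr ns) f (3 + i + (j-2)*nr + (k-1)*bn0 nr ns)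
     - fwr nt (bn0 nr ns) f (3 + i + (j-3)*nr + (k-1)*bn0 nr ns)"
proof -
  let ?\<rho> = "2 + i + (2*j-4)*nr"
  have b: "?\<rho> \<le> bn1 nr ns" using assms by (intro in_b1) auto
  have "p3 nr ns nt f k ?\<rho> = 0" unfolding p3_def
  proof (rule sum_if_none)
    fix i' assume "i' \<in> {1..nr}"
    thus "?\<rho> \<noteq> 2 + i'" using dig_eq[of i nr i' "2*j-4" 0] assms by auto
  qed
  moreover have "p4a nr ns nt f k ?\<rho> = 0" unfolding p4a_def
  proof (rule sum_if_none2)
    fix j' i' assume "j' \<in> {3..ns-1}" "i' \<in> {1..nr}"
    moreover have "2*j-4 \<noteq> 2*j'-5" using assms \<open>j' \<in> {3..ns-1}\<close> by presburger
    ultimately show "?\<rho> \<noteq> 2 + i' + (2*j'-5)*nr" using dig_eq[of i nr i' "2*j-4" "2*j'-5"] assms by auto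
  qed
  moreover have "p5 nr ns nt f k ?\<rho> = 0" unfolding p5_def
  proof (rule sum_if_none)
    fix i' assume "i' \<in> {1..nr}"
    moreover have "2*j-4 \<noteq> 2*ns-5" using assms by presburger
    ultimately show "?\<rho> \<noteq> 2 + i' + (2*ns-5)*nr" using dig_eq[of i nr i' "2*j-4" "2*ns-5"] assms by auto
  qed
  moreover have "p4b nr ns nt f k ?\<rho> = fwr nt (bn0 nr ns) f (3 + i + (j-2)*nr + (k-1)*bn0 nr ns)
     - fwr nt (bn0 nr ns) f (3 + i + (j-3)*nr + (k-1)*bn0 nr ns)" unfolding p4b_def
  proof (rule sum_if_one2)
    fix j' i' assume "j' \<in> {3..ns-1}" "i' \<in> {1..nr}"
    thus "?\<rho> = 2 + i' + (2*j'-4)*nr \<longleftrightarrow> (j' = j \<and> i' = i)"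
      using dig_eq[of i nr i' "2*j-4" "2*j'-4"] assms by auto
  qed (use assms in auto)
  ultimately show ?thesis unfolding blk_def using mid_p1p6[of ns ?\<rho>] b assms by simp
qed




lemma c_range: fixes i nr j :: nat assumes "1 \<le> i" "i \<le> nr" "1 \<le> j"
  shows "(nr < (j-1)*nr + i \<and> (j-1)*nr + i \<le> 2*nr) \<longleftrightarrow> j = 2"
proof (cases "j \<le> 2")
  case True
  then consider "j = 1" | "j = 2" using assms by linarith
  thus ?thesis by cases (use assms in auto)
next
  case False
  hence "2*nr \<le> (j-1)*nr" by (intro mult_le_mono1) simp
  hence "\<not> ((j-1)*nr + i \<le> 2*nr)" using assms by linarith
  thus ?thesis using False by auto
qed

lemma E10_at: assumes "ns \<ge> 3" "1 \<le> i" "i \<le> nr" "1 \<le> j" "j \<le> ns"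
  shows "E10 nr ns \<rho> ((j-1)*nr + i) = (if j = 2 \<and> (\<rho> = 1 \<or> \<rho> = 2) then Ebar2 nr (\<rho>+1) (i+1) - Ebar2 nr (\<rho>+1) i else 0)
     + (if 3 \<le> j \<and> \<rho> = 2 + i + (2*j-5)*nr then 1 else 0)"
proof -
  have p1: "(if (\<rho> = 1 \<or> \<rho> = 2) \<and> nr < (j-1)*nr + i \<and> (j-1)*nr + i \<le> 2 * nr
      then Ebar2 nr (\<rho> + 1) ((j-1)*nr + i - nr + 1) - Ebar2 nr (\<rho> + 1) ((j-1)*nr + i - nr) else 0)
     = (if j = 2 \<and> (\<rho> = 1 \<or> \<rho> = 2) then Ebar2 nr (\<rho>+1) (i+1) - Ebar2 nr (\<rho>+1) i else 0)"
    using c_range[OF assms(2,3,4)] by auto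
  have p2: "(\<Sum>j'=3..ns. \<Sum>i'=1..nr. if \<rho> = 2 + i' + (2 * j' - 5) * nr \<and> (j-1)*nr + i = i' + (j' - 1) * nr then 1 else 0)
     = (if 3 \<le> j \<and> \<rho> = 2 + i + (2*j-5)*nr then (1::real) else 0)"
  proof (cases "3 \<le> j \<and> \<rho> = 2 + i + (2*j-5)*nr")
    case True
    have "(\<Sum>j'=3..ns. \<Sum>i'=1..nr. if \<rho> = 2 + i' + (2 * j' - 5) * nr \<and> (j-1)*nr + i = i' + (j' - 1) * nr then 1 else 0)
       = (\<lambda>j' i'. 1::real) j i"
    proof (rule sum_if_one2)
      fix j' i' assume "j' \<in> {3..ns}" "i' \<in> {1..nr}"
      thus "(\<rho> = 2 + i' + (2 * j' - 5) * nr \<and> (j-1)*nr + i = i' + (j' - 1) * nr) \<longleftrightarrow> (j' = j \<and> i' = i)"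
        using dig_eq[of i nr i' "j-1" "j'-1"] True assms by (auto simp: add.commute)
    qed (use assms True in auto)
    thus ?thesis using True by simp
  next
    case False
    have "(\<Sum>j'=3..ns. \<Sum>i'=1..nr. if \<rho> = 2 + i' + (2 * j' - 5) * nr \<and> (j-1)*nr + i = i' + (j' - 1) * nr then 1 else 0) = (0::real)"
    proof (rule sum_if_none2)
      fix j' i' assume "j' \<in> {3..ns}" "i' \<in> {1..nr}"
      thus "\<not> (\<rho> = 2 + i' + (2 * j' - 5) * nr \<and> (j-1)*nr + i = i' + (j' - 1) * nr)"
        using dig_eq[of i nr i' "j-1" "j'-1"] False assms by (auto simp: add.commute)
    qed
    thus ?thesis using False by simp
  qed
  show ?thesis unfolding E10_def using p1 p2 by simp
qed

lemma E01_at: assumes "ns \<ge> 3" "1 \<le> i" "i \<le> nr" "1 \<le> j" "j \<le> ns - 1"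
  shows "E01 nr ns \<rho> ((j-1)*nr + i) = (if j = 1 \<and> (\<rho> = 1 \<or> \<rho> = 2) then Ebar2 nr (\<rho>+1) i - 1/3 else 0)
     + (if 2 \<le> j \<and> \<rho> = 2 + i + (2*j-4)*nr then 1 else 0)"
proof -
  have p1: "(if (\<rho> = 1 \<or> \<rho> = 2) \<and> 1 \<le> (j-1)*nr + i \<and> (j-1)*nr + i \<le> nr
      then Ebar2 nr (\<rho> + 1) ((j-1)*nr + i) - Ebar1 (\<rho> + 1) ((j-1)*nr + i) else 0)
     = (if j = 1 \<and> (\<rho> = 1 \<or> \<rho> = 2) then Ebar2 nr (\<rho>+1) i - 1/3 else 0)"
  proof (cases "j = 1")
    case False
    hence "1*nr \<le> (j-1)*nr" using assms by (intro mult_le_mono1) simp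
    hence "\<not> ((j-1)*nr + i \<le> nr)" using assms by linarith
    thus ?thesis using False by auto
  qed (use assms in \<open>auto simp: Ebar1_def\<close>)
  have p2: "(\<Sum>j'=2..ns-1. \<Sum>i'=1..nr. if \<rho> = 2 + i' + (2 * j' - 4) * nr \<and> (j-1)*nr + i = i' + (j' - 1) * nr then 1 else 0)
     = (if 2 \<le> j \<and> \<rho> = 2 + i + (2*j-4)*nr then (1::real) else 0)"
  proof (cases "2 \<le> j \<and> \<rho> = 2 + i + (2*j-4)*nr")
    case True
    have "(\<Sum>j'=2..ns-1. \<Sum>i'=1..nr. if \<rho> = 2 + i' + (2 * j' - 4) * nr \<and> (j-1)*nr + i = i' + (j' - 1) * nr then 1 else 0)
       = (\<lambda>j' i'. 1::real) j i"
    proof (rule sum_if_one2)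
      fix j' i' assume "j' \<in> {2..ns-1}" "i' \<in> {1..nr}"
      thus "(\<rho> = 2 + i' + (2 * j' - 4) * nr \<and> (j-1)*nr + i = i' + (j' - 1) * nr) \<longleftrightarrow> (j' = j \<and> i' = i)"
        using dig_eq[of i nr i' "j-1" "j'-1"] True assms by (auto simp: add.commute)
    qed (use assms True in auto)
    thus ?thesis using True by simp
  next
    case False
    have "(\<Sum>j'=2..ns-1. \<Sum>i'=1..nr. if \<rho> = 2 + i' + (2 * j' - 4) * nr \<and> (j-1)*nr + i = i' + (j' - 1) * nr then 1 else 0) = (0::real)"
    proof (rule sum_if_none2)
      fix j' i' assume "j' \<in> {2..ns-1}" "i' \<in> {1..nr}"
      thus "\<not> (\<rho> = 2 + i' + (2 * j' - 4) * nr \<and> (j-1)*nr + i = i' + (j' - 1) * nr)"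
        using dig_eq[of i nr i' "j-1" "j'-1"] False assms by (auto simp: add.commute)
    qed
    thus ?thesis using False by simp
  qed
  show ?thesis unfolding E01_def using p1 p2 by simp
qed




lemma sum12: "2 \<le> n \<Longrightarrow> (\<Sum>\<rho>=1..n. if \<rho> = 1 \<or> \<rho> = 2 then h \<rho> else (0::real)) = h 1 + h 2" for n :: nat
proof -
  assume n: "2 \<le> n"
  have "(\<Sum>\<rho>=1..n. if \<rho> = 1 \<or> \<rho> = 2 then h \<rho> else (0::real)) = (\<Sum>\<rho>=1..n. (if \<rho> = 1 then h \<rho> else 0) + (if \<rho> = 2 then h \<rho> else 0))"
    by (rule sum.cong) auto
  also have "\<dots> = h 1 + h 2" using n by (simp add: sum.distrib sum.delta')
  finally show ?thesis .
qed

lemma c_le: fixes i nr j ns :: nat assumes "i \<le> nr" "j \<le> ns" "1 \<le> j" shows "(j-1)*nr + i \<le> nr*ns"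
  using dig_le[of i nr "j-1" ns] assms by (simp add: mult.commute add.commute)

lemma b1_ge2: "2 \<le> bn1 nr ns" by (simp add: bn1_def)

lemma rhs_common: assumes "ns \<ge> 3" "1 \<le> k" "k \<le> nt" "1 \<le> c" "c \<le> s"
  shows "tmat_vec (n1 nr ns nt) (kron (bn1 nr ns + bn0 nr ns) s idm (vstack (bn1 nr ns) B zerom)) (D0 nr ns nt f) ((k-1)*s + c)
     = (\<Sum>\<rho>=1..bn1 nr ns. B \<rho> c * blk nr ns nt f k \<rho>)"
proof -
  have n1: "n1 nr ns nt = nt * (bn1 nr ns + bn0 nr ns)" by (simp add: n1_def add.commute)
  have "tmat_vec (n1 nr ns nt) (kron (bn1 nr ns + bn0 nr ns) s idm (vstack (bn1 nr ns) B zerom)) (D0 nr ns nt f) ((k-1)*s + c)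
     = (\<Sum>\<rho>=1..bn1 nr ns + bn0 nr ns. vstack (bn1 nr ns) B zerom \<rho> c * D0 nr ns nt f ((k-1)*(bn1 nr ns + bn0 nr ns)+\<rho>))"
    unfolding n1 by (rule tkron) (use assms in auto)
  also have "\<dots> = (\<Sum>\<rho>=1..bn1 nr ns. vstack (bn1 nr ns) B zerom \<rho> c * D0 nr ns nt f ((k-1)*(bn1 nr ns + bn0 nr ns)+\<rho>))
     + (\<Sum>\<rho>=bn1 nr ns + 1..bn1 nr ns + bn0 nr ns. vstack (bn1 nr ns) B zerom \<rho> c * D0 nr ns nt f ((k-1)*(bn1 nr ns + bn0 nr ns)+\<rho>))"
    by (rule sum_split) simp
  also have "(\<Sum>\<rho>=bn1 nr ns + 1..bn1 nr ns + bn0 nr ns. vstack (bn1 nr ns) B zerom \<rho> c * D0 nr ns nt f ((k-1)*(bn1 nr ns + bn0 nr ns)+\<rho>)) = 0"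
    by (intro sum.neutral) (auto simp: vstack_def zerom_def)
  also have "(\<Sum>\<rho>=1..bn1 nr ns. vstack (bn1 nr ns) B zerom \<rho> c * D0 nr ns nt f ((k-1)*(bn1 nr ns + bn0 nr ns)+\<rho>))
     = (\<Sum>\<rho>=1..bn1 nr ns. B \<rho> c * blk nr ns nt f k \<rho>)"
  proof (rule sum.cong[OF refl])
    fix \<rho> assume r: "\<rho> \<in> {1..bn1 nr ns}"
    have "D0 nr ns nt f ((k-1)*(bn0 nr ns + bn1 nr ns)+\<rho>) = blk nr ns nt f k \<rho>"
      by (rule D0_at) (use assms r in auto)
    thus "vstack (bn1 nr ns) B zerom \<rho> c * D0 nr ns nt f ((k-1)*(bn1 nr ns + bn0 nr ns)+\<rho>) = B \<rho> c * blk nr ns nt f k \<rho>"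
      using r by (simp add: vstack_def add.commute)
  qed
  finally show ?thesis by simp
qed

lemma rhs_a: assumes "ns \<ge> 3" "1 \<le> k" "k \<le> nt" "1 \<le> i" "i \<le> nr" "1 \<le> j" "j \<le> ns"
  shows "tmat_vec (n1 nr ns nt) (E100 nr ns) (D0 nr ns nt f) ((k-1)*(nr*ns) + ((j-1)*nr + i))
   = (if j = 2 then (Ebar2 nr 2 (i+1) - Ebar2 nr 2 i) * blk nr ns nt f k 1 + (Ebar2 nr 3 (i+1) - Ebar2 nr 3 i) * blk nr ns nt f k 2 else 0)
   + (if 3 \<le> j then blk nr ns nt f k (2 + i + (2*j-5)*nr) else 0)"
proof -
  let ?c = "(j-1)*nr + i"
  let ?B = "blk nr ns nt f k"
  have c: "1 \<le> ?c" "?c \<le> nr*ns" using assms c_le[of i nr j ns] by auto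
  have "tmat_vec (n1 nr ns nt) (E100 nr ns) (D0 nr ns nt f) ((k-1)*(nr*ns) + ?c) = (\<Sum>\<rho>=1..bn1 nr ns. E10 nr ns \<rho> ?c * ?B \<rho>)"
    unfolding E100_def by (rule rhs_common) (use assms c in auto)
  also have "\<dots> = (\<Sum>\<rho>=1..bn1 nr ns. (if j = 2 \<and> (\<rho> = 1 \<or> \<rho> = 2) then (Ebar2 nr (\<rho>+1) (i+1) - Ebar2 nr (\<rho>+1) i) * ?B \<rho> else 0)
     + (if 3 \<le> j \<and> \<rho> = 2 + i + (2*j-5)*nr then ?B \<rho> else 0))"
    by (rule sum.cong[OF refl], subst E10_at[OF assms(1,4,5,6,7)]) (auto simp: distrib_right)
  also have "\<dots> = (\<Sum>\<rho>=1..bn1 nr ns. (if j = 2 \<and> (\<rho> = 1 \<or> \<rho> = 2) then (Ebar2 nr (\<rho>+1) (i+1) - Ebar2 nr (\<rho>+1) i) * ?B \<rho> else 0))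
     + (\<Sum>\<rho>=1..bn1 nr ns. (if 3 \<le> j \<and> \<rho> = 2 + i + (2*j-5)*nr then ?B \<rho> else 0))"
    by (rule sum.distrib)
  also have "(\<Sum>\<rho>=1..bn1 nr ns. (if 3 \<le> j \<and> \<rho> = 2 + i + (2*j-5)*nr then ?B \<rho> else 0))
     = (if 3 \<le> j then ?B (2 + i + (2*j-5)*nr) else 0)"
  proof (cases "3 \<le> j")
    case True
    have "2 + i + (2*j-5)*nr \<le> bn1 nr ns" using assms True by (intro in_b1) auto
    thus ?thesis using True by (simp add: sum.delta')
  qed simp
  also have "(\<Sum>\<rho>=1..bn1 nr ns. (if j = 2 \<and> (\<rho> = 1 \<or> \<rho> = 2) then (Ebar2 nr (\<rho>+1) (i+1) - Ebar2 nr (\<rho>+1) i) * ?B \<rho> else 0))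
     = (if j = 2 then (Ebar2 nr 2 (i+1) - Ebar2 nr 2 i) * ?B 1 + (Ebar2 nr 3 (i+1) - Ebar2 nr 3 i) * ?B 2 else 0)"
  proof (cases "j = 2")
    case True
    thus ?thesis using sum12[OF b1_ge2[of nr ns], where h="\<lambda>\<rho>. (Ebar2 nr (\<rho>+1) (i+1) - Ebar2 nr (\<rho>+1) i) * ?B \<rho>"] by (simp add: numeral_2_eq_2 numeral_3_eq_3)
  qed simp
  finally show ?thesis .
qed

lemma rhs_b: assumes "ns \<ge> 3" "1 \<le> k" "k \<le> nt" "1 \<le> i" "i \<le> nr" "1 \<le> j" "j \<le> ns - 1"
  shows "tmat_vec (n1 nr ns nt) (E010 nr ns) (D0 nr ns nt f) ((k-1)*(nr*(ns-1)) + ((j-1)*nr + i))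
   = (if j = 1 then (Ebar2 nr 2 i - 1/3) * blk nr ns nt f k 1 + (Ebar2 nr 3 i - 1/3) * blk nr ns nt f k 2 else 0)
   + (if 2 \<le> j then blk nr ns nt f k (2 + i + (2*j-4)*nr) else 0)"
proof -
  let ?c = "(j-1)*nr + i"
  let ?B = "blk nr ns nt f k"
  have c: "1 \<le> ?c" "?c \<le> nr*(ns-1)" using assms c_le[of i nr j "ns-1"] by auto
  have "tmat_vec (n1 nr ns nt) (E010 nr ns) (D0 nr ns nt f) ((k-1)*(nr*(ns-1)) + ?c) = (\<Sum>\<rho>=1..bn1 nr ns. E01 nr ns \<rho> ?c * ?B \<rho>)"
    unfolding E010_def by (rule rhs_common) (use assms c in auto)
  also have "\<dots> = (\<Sum>\<rho>=1..bn1 nr ns. (if j = 1 \<and> (\<rho> = 1 \<or> \<rho> = 2) then (Ebar2 nr (\<rho>+1) i - 1/3) * ?B \<rho> else 0)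
     + (if 2 \<le> j \<and> \<rho> = 2 + i + (2*j-4)*nr then ?B \<rho> else 0))"
    by (rule sum.cong[OF refl], subst E01_at[OF assms(1,4,5,6,7)]) (auto simp: distrib_right)
  also have "\<dots> = (\<Sum>\<rho>=1..bn1 nr ns. (if j = 1 \<and> (\<rho> = 1 \<or> \<rho> = 2) then (Ebar2 nr (\<rho>+1) i - 1/3) * ?B \<rho> else 0))
     + (\<Sum>\<rho>=1..bn1 nr ns. (if 2 \<le> j \<and> \<rho> = 2 + i + (2*j-4)*nr then ?B \<rho> else 0))"
    by (rule sum.distrib)
  also have "(\<Sum>\<rho>=1..bn1 nr ns. (if 2 \<le> j \<and> \<rho> = 2 + i + (2*j-4)*nr then ?B \<rho> else 0))
     = (if 2 \<le> j then ?B (2 + i + (2*j-4)*nr) else 0)"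
  proof (cases "2 \<le> j")
    case True
    have "2 + i + (2*j-4)*nr \<le> bn1 nr ns" using assms True by (intro in_b1) auto
    thus ?thesis using True by (simp add: sum.delta')
  qed simp
  also have "(\<Sum>\<rho>=1..bn1 nr ns. (if j = 1 \<and> (\<rho> = 1 \<or> \<rho> = 2) then (Ebar2 nr (\<rho>+1) i - 1/3) * ?B \<rho> else 0))
     = (if j = 1 then (Ebar2 nr 2 i - 1/3) * ?B 1 + (Ebar2 nr 3 i - 1/3) * ?B 2 else 0)"
  proof (cases "j = 1")
    case True
    thus ?thesis using sum12[OF b1_ge2[of nr ns], where h="\<lambda>\<rho>. (Ebar2 nr (\<rho>+1) i - 1/3) * ?B \<rho>"] by (simp add: numeral_2_eq_2 numeral_3_eq_3)
  qed simp
  finally show ?thesis .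
qed




lemma U_gen: assumes "1 \<le> k" "k \<le> nt" "1 \<le> c" "c \<le> nr*ns"
  shows "tmat_vec (n0 nr ns nt) (E000 nr ns) f ((k-1)*(nr*ns) + c) = (\<Sum>a=1..bn0 nr ns. E0 nr a c * f((k-1)*bn0 nr ns + a))"
  unfolding n0_def E000_def by (rule tkron) (use assms in auto)

lemma U_val: assumes "ns \<ge> 3" "1 \<le> k" "k \<le> nt" "1 \<le> i" "i \<le> nr" "1 \<le> j" "j \<le> ns"
  shows "tmat_vec (n0 nr ns nt) (E000 nr ns) f ((k-1)*(nr*ns) + ((j-1)*nr + i))
     = (if j = 1 then (f((k-1)*bn0 nr ns + 1) + f((k-1)*bn0 nr ns + 2) + f((k-1)*bn0 nr ns + 3))/3
        else if j = 2 then (\<Sum>l=1..3. Ebar2 nr l i * f((k-1)*bn0 nr ns + l))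
        else f((k-1)*bn0 nr ns + (3 + i + (j-3)*nr)))"
proof -
  have c: "1 \<le> (j-1)*nr + i" "(j-1)*nr + i \<le> nr*ns" using assms c_le[of i nr j ns] by auto
  note U = U_gen[OF assms(2,3) c, of f]
  show ?thesis
  proof (cases "j \<le> 2")
    case True
    then consider "j = 1" | "j = 2" using assms by linarith
    thus ?thesis
    proof cases
      case 1 thus ?thesis using U E0T1[OF assms(4,5), where ns=ns and \<phi>="\<lambda>a. f((k-1)*bn0 nr ns + a)"] by simp
    next
      case 2 thus ?thesis using U E0T2[OF assms(4,5), where ns=ns and \<phi>="\<lambda>a. f((k-1)*bn0 nr ns + a)"] by simp
    qed
  next
    case False
    then obtain j' where j': "j = j' + 3" by (metis add.commute le_Suc_ex not_less_eq_eq numeral_2_eq_2 numeral_3_eq_3)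
    have "(j-1)*nr + i = (j'+2)*nr + i" using j' by simp
    thus ?thesis using U E0T3[OF assms(4,5), where j'=j' and ns=ns and \<phi>="\<lambda>a. f((k-1)*bn0 nr ns + a)"] j' assms False by simp
  qed
qed

lemma lhs_a: assumes "1 \<le> k" "k \<le> nt" "1 \<le> i" "i \<le> nr" "1 \<le> j" "j \<le> ns"
  shows "mat_vec (nt*ns*nr) (D100 nr ns) u ((k-1)*(nr*ns) + ((j-1)*nr + i))
    = (if i < nr then u((k-1)*(nr*ns) + ((j-1)*nr + (i+1))) else u((k-1)*(nr*ns) + ((j-1)*nr + 1)))
      - u((k-1)*(nr*ns) + ((j-1)*nr + i))"
proof -
  let ?w = "\<lambda>c'. u((k-1)*(ns*nr) + c')"
  have c: "1 \<le> (j-1)*nr + i" "(j-1)*nr + i \<le> ns*nr" using assms c_le[of i nr j ns] by (auto simp: mult.commute)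
  have "mat_vec (nt*(ns*nr)) (D100 nr ns) u ((k-1)*(ns*nr) + ((j-1)*nr + i))
      = (\<Sum>k'=1..nt. idm k k' * (\<Sum>c'=1..ns*nr. kron nr nr idm (diffm_per nr) ((j-1)*nr + i) c' * u((k'-1)*(ns*nr)+c')))"
    unfolding D100_def by (rule mkron) (use assms c in auto)
  also have "\<dots> = (\<Sum>c'=1..ns*nr. kron nr nr idm (diffm_per nr) ((j-1)*nr + i) c' * ?w c')"
    by (rule idm_sum[where w="\<lambda>k'. \<Sum>c'=1..ns*nr. kron nr nr idm (diffm_per nr) ((j-1)*nr + i) c' * u((k'-1)*(ns*nr)+c')"]) (use assms in auto)
  also have "\<dots> = mat_vec (ns*nr) (kron nr nr idm (diffm_per nr)) ?w ((j-1)*nr + i)"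
    unfolding mat_vec_def ..
  also have "\<dots> = (\<Sum>j'=1..ns. idm j j' * (\<Sum>i'=1..nr. diffm_per nr i i' * ?w ((j'-1)*nr+i')))"
    by (rule mkron) (use assms in auto)
  also have "\<dots> = (\<Sum>i'=1..nr. diffm_per nr i i' * ?w ((j-1)*nr+i'))"
    by (rule idm_sum) (use assms in auto)
  also have "\<dots> = (if i < nr then ?w ((j-1)*nr+(i+1)) - ?w ((j-1)*nr+i) else ?w ((j-1)*nr+1) - ?w ((j-1)*nr+nr))"
    by (rule dper_sum[where w = "\<lambda>i'. ?w ((j-1)*nr+i')"]) (use assms in auto)
  finally show ?thesis using assms by (auto simp: mult.commute mult.left_commute)
qed


lemma lhs_b: assumes "1 \<le> k" "k \<le> nt" "1 \<le> i" "i \<le> nr" "1 \<le> j" "j \<le> ns - 1"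
  shows "mat_vec (nt*ns*nr) (D010 nr ns) u ((k-1)*(nr*(ns-1)) + ((j-1)*nr + i))
    = u((k-1)*(nr*ns) + (j*nr + i)) - u((k-1)*(nr*ns) + ((j-1)*nr + i))"
proof -
  let ?w = "\<lambda>c'. u((k-1)*(ns*nr) + c')"
  have c: "1 \<le> (j-1)*nr + i" "(j-1)*nr + i \<le> (ns-1)*nr" using assms c_le[of i nr j "ns-1"] by (auto simp: mult.commute)
  have "mat_vec (nt*(ns*nr)) (D010 nr ns) u ((k-1)*((ns-1)*nr) + ((j-1)*nr + i))
      = (\<Sum>k'=1..nt. idm k k' * (\<Sum>c'=1..ns*nr. kron nr nr diffm idm ((j-1)*nr + i) c' * u((k'-1)*(ns*nr)+c')))"
    unfolding D010_def by (rule mkron) (use assms c in auto)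
  also have "\<dots> = (\<Sum>c'=1..ns*nr. kron nr nr diffm idm ((j-1)*nr + i) c' * ?w c')"
    by (rule idm_sum[where w="\<lambda>k'. \<Sum>c'=1..ns*nr. kron nr nr diffm idm ((j-1)*nr + i) c' * u((k'-1)*(ns*nr)+c')"]) (use assms in auto)
  also have "\<dots> = mat_vec (ns*nr) (kron nr nr diffm idm) ?w ((j-1)*nr + i)"
    unfolding mat_vec_def ..
  also have "\<dots> = (\<Sum>j'=1..ns. diffm j j' * (\<Sum>i'=1..nr. idm i i' * ?w ((j'-1)*nr+i')))"
    by (rule mkron) (use assms in auto)
  also have "\<dots> = (\<Sum>j'=1..ns. diffm j j' * ?w ((j'-1)*nr+i))"
    by (rule sum.cong[OF refl], subst idm_sum) (use assms in auto)
  also have "\<dots> = ?w ((j+1-1)*nr+i) - ?w ((j-1)*nr+i)"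
    by (rule diffm_sum[where w = "\<lambda>j'. ?w ((j'-1)*nr+i)"]) (use assms in auto)
  finally show ?thesis using assms by (auto simp: mult.commute mult.left_commute)
qed

lemma idid_sum: assumes "1 \<le> i" "i \<le> nr" "1 \<le> j" "j \<le> ns"
  shows "(\<Sum>c'=1..ns*nr. kron nr nr idm idm ((j-1)*nr + i) c' * w c') = w ((j-1)*nr + i)"
proof -
  have "(\<Sum>c'=1..ns*nr. kron nr nr idm idm ((j-1)*nr + i) c' * w c') = mat_vec (ns*nr) (kron nr nr idm idm) w ((j-1)*nr + i)"
    unfolding mat_vec_def ..
  also have "\<dots> = (\<Sum>j'=1..ns. idm j j' * (\<Sum>i'=1..nr. idm i i' * w ((j'-1)*nr+i')))"
    by (rule mkron) (use assms in auto)
  also have "\<dots> = (\<Sum>j'=1..ns. idm j j' * w ((j'-1)*nr+i))"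
    by (rule sum.cong[OF refl], subst idm_sum) (use assms in auto)
  also have "\<dots> = w ((j-1)*nr + i)"
    by (rule idm_sum[where w = "\<lambda>j'. w ((j'-1)*nr+i)"]) (use assms in auto)
  finally show ?thesis .
qed

lemma lhs_c: assumes "2 \<le> nt" "1 \<le> k" "k \<le> nt" "1 \<le> i" "i \<le> nr" "1 \<le> j" "j \<le> ns"
  shows "mat_vec (nt*ns*nr) (D001 nr ns nt) u ((k-1)*(nr*ns) + ((j-1)*nr + i))
    = (if k < nt then u(k*(nr*ns) + ((j-1)*nr + i)) else u((j-1)*nr + i)) - u((k-1)*(nr*ns) + ((j-1)*nr + i))"
proof -
  let ?c = "(j-1)*nr + i"
  let ?w = "\<lambda>k'. u((k'-1)*(ns*nr) + ?c)"
  have c: "1 \<le> ?c" "?c \<le> ns*nr" using assms c_le[of i nr j ns] by (auto simp: mult.commute)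
  have "mat_vec (nt*(ns*nr)) (D001 nr ns nt) u ((k-1)*(ns*nr) + ?c)
      = (\<Sum>k'=1..nt. diffm_per nt k k' * (\<Sum>c'=1..ns*nr. kron nr nr idm idm ?c c' * u((k'-1)*(ns*nr)+c')))"
    unfolding D001_def by (rule mkron) (use assms c in auto)
  also have "\<dots> = (\<Sum>k'=1..nt. diffm_per nt k k' * ?w k')"
    by (rule sum.cong[OF refl], subst idid_sum) (use assms in auto)
  also have "\<dots> = (if k < nt then ?w (k+1) - ?w k else ?w 1 - ?w nt)"
    by (rule dper_sum) (use assms in auto)
  finally show ?thesis using assms by (auto simp: mult.commute mult.left_commute)
qed




lemma fwr_in: "x \<le> nt*b0 \<Longrightarrow> fwr nt b0 f x = f x" by (simp add: fwr_def)
lemma fwr_out: "nt*b0 < x \<Longrightarrow> fwr nt b0 f x = f (x - nt*b0)" by (simp add: fwr_def)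

lemma idx_ok: "x \<le> b0 \<Longrightarrow> 1 \<le> k \<Longrightarrow> k \<le> nt \<Longrightarrow> x + (k-1)*b0 \<le> nt*b0" for x b0 k nt :: nat
proof -
  assume a: "x \<le> b0" "1 \<le> k" "k \<le> nt"
  have "k*b0 \<le> nt*b0" using a by (intro mult_le_mono1)
  moreover have "(k-1)*b0 + b0 = k*b0" using a by (cases k) auto
  ultimately show ?thesis using a by linarith
qed

lemma rhs_c: assumes "ns \<ge> 3" "1 \<le> k" "k \<le> nt" "1 \<le> c" "c \<le> nr*ns"
  shows "tmat_vec (n1 nr ns nt) (E001 nr ns) (D0 nr ns nt f) ((k-1)*(nr*ns) + c)
     = (\<Sum>a=1..bn0 nr ns. E0 nr a c * (fwr nt (bn0 nr ns) f (a + k*bn0 nr ns) - fwr nt (bn0 nr ns) f (a + (k-1)*bn0 nr ns)))"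
proof -
  have n1: "n1 nr ns nt = nt * (bn1 nr ns + bn0 nr ns)" by (simp add: n1_def add.commute)
  let ?B = "vstack (bn1 nr ns) zerom (E0 nr)"
  let ?y = "\<lambda>\<rho>. D0 nr ns nt f ((k-1)*(bn1 nr ns + bn0 nr ns)+\<rho>)"
  have "tmat_vec (n1 nr ns nt) (E001 nr ns) (D0 nr ns nt f) ((k-1)*(nr*ns) + c)
     = (\<Sum>\<rho>=1..bn1 nr ns + bn0 nr ns. ?B \<rho> c * ?y \<rho>)"
    unfolding n1 E001_def by (rule tkron) (use assms in auto)
  also have "\<dots> = (\<Sum>\<rho>=1..bn1 nr ns. ?B \<rho> c * ?y \<rho>) + (\<Sum>\<rho>=bn1 nr ns + 1..bn1 nr ns + bn0 nr ns. ?B \<rho> c * ?y \<rho>)"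
    by (rule sum_split) simp
  also have "(\<Sum>\<rho>=1..bn1 nr ns. ?B \<rho> c * ?y \<rho>) = 0"
    by (intro sum.neutral) (auto simp: vstack_def zerom_def)
  also have "(\<Sum>\<rho>=bn1 nr ns + 1..bn1 nr ns + bn0 nr ns. ?B \<rho> c * ?y \<rho>) = (\<Sum>a=1..bn0 nr ns. ?B (a + bn1 nr ns) c * ?y (a + bn1 nr ns))"
    using sum.shift_bounds_cl_nat_ivl[of "\<lambda>\<rho>. ?B \<rho> c * ?y \<rho>" 1 "bn1 nr ns" "bn0 nr ns"] by (simp add: add.commute)
  also have "\<dots> = (\<Sum>a=1..bn0 nr ns. E0 nr a c * (fwr nt (bn0 nr ns) f (a + k*bn0 nr ns) - fwr nt (bn0 nr ns) f (a + (k-1)*bn0 nr ns)))"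
  proof (rule sum.cong[OF refl])
    fix a assume a: "a \<in> {1..bn0 nr ns}"
    have "D0 nr ns nt f ((k-1)*(bn0 nr ns + bn1 nr ns) + (a + bn1 nr ns)) = blk nr ns nt f k (a + bn1 nr ns)"
      by (rule D0_at) (use assms a in auto)
    also have "\<dots> = fwr nt (bn0 nr ns) f (a + k*bn0 nr ns) - fwr nt (bn0 nr ns) f (a + (k-1)*bn0 nr ns)"
      by (rule R6) (use assms a in auto)
    finally show "?B (a + bn1 nr ns) c * ?y (a + bn1 nr ns) = E0 nr a c * (fwr nt (bn0 nr ns) f (a + k*bn0 nr ns) - fwr nt (bn0 nr ns) f (a + (k-1)*bn0 nr ns))"
      using a by (simp add: vstack_def add.commute)
  qed
  finally show ?thesis by simp
qed




lemma Ebar2_wrap': "Ebar2 nr l (Suc nr) = Ebar2 nr l (Suc 0)"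
  using Ebar2_wrap by simp

lemma partA: assumes "nr \<ge> 2" "ns \<ge> 3" "1 \<le> k" "k \<le> nt" "1 \<le> i" "i \<le> nr" "1 \<le> j" "j \<le> ns"
  shows "mat_vec (nt*ns*nr) (D100 nr ns) (tmat_vec (n0 nr ns nt) (E000 nr ns) f) ((k-1)*(nr*ns) + ((j-1)*nr + i))
    = tmat_vec (n1 nr ns nt) (E100 nr ns) (D0 nr ns nt f) ((k-1)*(nr*ns) + ((j-1)*nr + i))"
proof -
  define u where "u = tmat_vec (n0 nr ns nt) (E000 nr ns) f"
  define b0 where "b0 = bn0 nr ns"
  define \<phi> where "\<phi> = (\<lambda>a. f((k-1)*b0 + a))"
  have U: "\<And>i'. 1 \<le> i' \<Longrightarrow> i' \<le> nr \<Longrightarrow> u ((k-1)*(nr*ns) + ((j-1)*nr + i'))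
     = (if j = 1 then (\<phi> 1 + \<phi> 2 + \<phi> 3)/3
        else if j = 2 then (\<Sum>l=1..3. Ebar2 nr l i' * \<phi> l)
        else \<phi> (3 + i' + (j-3)*nr))"
    unfolding u_def \<phi>_def b0_def by (rule U_val) (use assms in auto)
  have fw: "\<And>x. x \<le> b0 \<Longrightarrow> fwr nt b0 f (x + (k-1)*b0) = \<phi> x"
    unfolding \<phi>_def using idx_ok assms by (simp add: fwr_in add.commute)
  have L: "mat_vec (nt*ns*nr) (D100 nr ns) u ((k-1)*(nr*ns) + ((j-1)*nr + i))
    = (if i < nr then u((k-1)*(nr*ns) + ((j-1)*nr + (i+1))) else u((k-1)*(nr*ns) + ((j-1)*nr + 1)))
      - u((k-1)*(nr*ns) + ((j-1)*nr + i))"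
    by (rule lhs_a) (use assms in auto)
  have R: "tmat_vec (n1 nr ns nt) (E100 nr ns) (D0 nr ns nt f) ((k-1)*(nr*ns) + ((j-1)*nr + i))
   = (if j = 2 then (Ebar2 nr 2 (i+1) - Ebar2 nr 2 i) * blk nr ns nt f k 1 + (Ebar2 nr 3 (i+1) - Ebar2 nr 3 i) * blk nr ns nt f k 2 else 0)
   + (if 3 \<le> j then blk nr ns nt f k (2 + i + (2*j-5)*nr) else 0)"
    by (rule rhs_a) (use assms in auto)
  have b0ge: "3 \<le> b0" unfolding b0_def bn0_def by simp
  show ?thesis
  proof -
    consider "j = 1" | "j = 2" | "3 \<le> j" using assms by linarith
    then show ?thesis
    proof cases
      case 1
      have e: "\<And>i'. 1 \<le> i' \<Longrightarrow> i' \<le> nr \<Longrightarrow> u((k-1)*(nr*ns) + ((j-1)*nr + i')) = (\<phi> 1 + \<phi> 2 + \<phi> 3)/3"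
        using U 1 by simp
      have "(if i < nr then u((k-1)*(nr*ns) + ((j-1)*nr + (i+1))) else u((k-1)*(nr*ns) + ((j-1)*nr + 1)))
          = u((k-1)*(nr*ns) + ((j-1)*nr + i))"
        using e[of "i+1"] e[of 1] e[of i] assms by auto
      thus ?thesis unfolding u_def[symmetric] L R using 1 by simp
    next
      case 2
      have B1: "blk nr ns nt f k 1 = \<phi> 2 - \<phi> 1" using R1[of ns nr nt f k] fw[of 1] fw[of 2] b0ge assms
        by (simp add: b0_def add.commute)
      have B2: "blk nr ns nt f k 2 = \<phi> 3 - \<phi> 1" using R2[of ns nr nt f k] fw[of 1] fw[of 3] b0ge assms
        by (simp add: b0_def add.commute)
      have next_: "(if i < nr then u((k-1)*(nr*ns) + ((j-1)*nr + (i+1))) else u((k-1)*(nr*ns) + ((j-1)*nr + 1)))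
          = (\<Sum>l=1..3. Ebar2 nr l (i+1) * \<phi> l)"
        using U[of "i+1"] U[of 1] 2 assms by (auto simp: Ebar2_wrap')
      have cur: "u((k-1)*(nr*ns) + ((j-1)*nr + i)) = (\<Sum>l=1..3. Ebar2 nr l i * \<phi> l)"
        using U[of i] 2 assms by auto
      have s1: "Ebar2 nr 1 (i+1) = 1 - Ebar2 nr 2 (i+1) - Ebar2 nr 3 (i+1)" "Ebar2 nr 1 i = 1 - Ebar2 nr 2 i - Ebar2 nr 3 i"
        using Ebar2_sum[of nr "i+1"] Ebar2_sum[of nr i] by linarith+
      have s2: "\<phi> 1 * (Ebar2 nr 1 (i+1) + Ebar2 nr 2 (i+1) + Ebar2 nr 3 (i+1)) = \<phi> 1 * (Ebar2 nr 1 i + Ebar2 nr 2 i + Ebar2 nr 3 i)"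
        by (simp only: Ebar2_sum)
      show ?thesis unfolding u_def[symmetric] L R next_ cur B1 B2 three_set using 2 s2
        by (simp add: algebra_simps)
    next
      case 3
      have B: "blk nr ns nt f k (2 + i + (2*j-5)*nr) = \<phi> (3 + sigma nr i + (j-3)*nr) - \<phi> (3 + i + (j-3)*nr)"
      proof -
        have s: "sigma nr i \<le> nr" unfolding sigma_def using assms by auto
        have "sigma nr i + (j-3)*nr \<le> (ns-2)*nr" using dig_le[OF s, of "j-3" "ns-2"] assms 3 by simp
        hence x1: "3 + sigma nr i + (j-3)*nr \<le> b0" unfolding b0_def bn0_def by (simp add: mult.commute)
        have "i + (j-3)*nr \<le> (ns-2)*nr" using dig_le[of i nr "j-3" "ns-2"] assms 3 by simp
        hence x2: "3 + i + (j-3)*nr \<le> b0" unfolding b0_def bn0_def by (simp add: mult.commute)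
        show ?thesis using R4[of ns i nr j nt f k] fw[OF x1] fw[OF x2] assms 3 by (simp add: b0_def)
      qed
      have "(if i < nr then u((k-1)*(nr*ns) + ((j-1)*nr + (i+1))) else u((k-1)*(nr*ns) + ((j-1)*nr + 1)))
          = \<phi> (3 + sigma nr i + (j-3)*nr)"
        using U[of "i+1"] U[of 1] 3 assms by (auto simp: sigma_def)
      moreover have "u((k-1)*(nr*ns) + ((j-1)*nr + i)) = \<phi> (3 + i + (j-3)*nr)"
        using U[of i] 3 assms by auto
      ultimately show ?thesis unfolding u_def[symmetric] L R B using 3 by simp
    qed
  qed
qed


lemma partB: assumes "nr \<ge> 2" "ns \<ge> 3" "1 \<le> k" "k \<le> nt" "1 \<le> i" "i \<le> nr" "1 \<le> j" "j \<le> ns - 1"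
  shows "mat_vec (nt*ns*nr) (D010 nr ns) (tmat_vec (n0 nr ns nt) (E000 nr ns) f) ((k-1)*(nr*(ns-1)) + ((j-1)*nr + i))
    = tmat_vec (n1 nr ns nt) (E010 nr ns) (D0 nr ns nt f) ((k-1)*(nr*(ns-1)) + ((j-1)*nr + i))"
proof -
  define u where "u = tmat_vec (n0 nr ns nt) (E000 nr ns) f"
  define b0 where "b0 = bn0 nr ns"
  define \<phi> where "\<phi> = (\<lambda>a. f((k-1)*b0 + a))"
  have Ucur: "u ((k-1)*(nr*ns) + ((j-1)*nr + i))
     = (if j = 1 then (\<phi> 1 + \<phi> 2 + \<phi> 3)/3
        else if j = 2 then (\<Sum>l=1..3. Ebar2 nr l i * \<phi> l)
        else \<phi> (3 + i + (j-3)*nr))"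
    unfolding u_def \<phi>_def b0_def by (rule U_val) (use assms in auto)
  have Unext0: "u ((k-1)*(nr*ns) + ((j+1-1)*nr + i))
     = (if j+1 = 1 then (\<phi> 1 + \<phi> 2 + \<phi> 3)/3
        else if j+1 = 2 then (\<Sum>l=1..3. Ebar2 nr l i * \<phi> l)
        else \<phi> (3 + i + (j+1-3)*nr))"
    unfolding u_def \<phi>_def b0_def by (rule U_val) (use assms in auto)
  have Unext: "u ((k-1)*(nr*ns) + (j*nr + i))
     = (if j = 1 then (\<Sum>l=1..3. Ebar2 nr l i * \<phi> l) else \<phi> (3 + i + (j-2)*nr))"
    using Unext0 assms by (auto simp: numeral_3_eq_3 numeral_2_eq_2)
  have fw: "\<And>x. x \<le> b0 \<Longrightarrow> fwr nt b0 f (x + (k-1)*b0) = \<phi> x"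
    unfolding \<phi>_def using idx_ok assms by (simp add: fwr_in add.commute)
  have L: "mat_vec (nt*ns*nr) (D010 nr ns) u ((k-1)*(nr*(ns-1)) + ((j-1)*nr + i))
    = u((k-1)*(nr*ns) + (j*nr + i)) - u((k-1)*(nr*ns) + ((j-1)*nr + i))"
    by (rule lhs_b) (use assms in auto)
  have R: "tmat_vec (n1 nr ns nt) (E010 nr ns) (D0 nr ns nt f) ((k-1)*(nr*(ns-1)) + ((j-1)*nr + i))
   = (if j = 1 then (Ebar2 nr 2 i - 1/3) * blk nr ns nt f k 1 + (Ebar2 nr 3 i - 1/3) * blk nr ns nt f k 2 else 0)
   + (if 2 \<le> j then blk nr ns nt f k (2 + i + (2*j-4)*nr) else 0)"
    by (rule rhs_b) (use assms in auto)
  have b0ge: "3 \<le> b0" unfolding b0_def bn0_def by simp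
  have xb: "\<And>q. q < ns - 2 \<Longrightarrow> 3 + i + q*nr \<le> b0"
  proof -
    fix q assume "q < ns - 2"
    hence "i + q*nr \<le> (ns-2)*nr" using dig_le[of i nr q "ns-2"] assms by simp
    thus "3 + i + q*nr \<le> b0" unfolding b0_def bn0_def by (simp add: mult.commute)
  qed
  consider "j = 1" | "j = 2" | "3 \<le> j" using assms by linarith
  then show ?thesis
  proof cases
    case 1
    have B1: "blk nr ns nt f k 1 = \<phi> 2 - \<phi> 1" using R1[of ns nr nt f k] fw[of 1] fw[of 2] b0ge assms
      by (simp add: b0_def add.commute)
    have B2: "blk nr ns nt f k 2 = \<phi> 3 - \<phi> 1" using R2[of ns nr nt f k] fw[of 1] fw[of 3] b0ge assms
      by (simp add: b0_def add.commute)
    have e1: "Ebar2 nr 1 i = 1 - Ebar2 nr 2 i - Ebar2 nr 3 i"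
      using Ebar2_sum[of nr i] by linarith
    have s2: "\<phi> 1 * Ebar2 nr 1 i = \<phi> 1 * (1 - Ebar2 nr 2 i - Ebar2 nr 3 i)"
      by (simp only: e1)
    show ?thesis unfolding u_def[symmetric] L R Unext Ucur B1 B2 three_set using 1 s2
      apply (simp add: algebra_simps)
      apply (simp add: field_simps)
      done
  next
    case 2
    have B: "blk nr ns nt f k (2 + i + (2*j-4)*nr) = \<phi> (3 + i) - (\<Sum>l=1..3. Ebar2 nr l i * \<phi> l)"
    proof -
      have "blk nr ns nt f k (2 + i + (2*j-4)*nr) = blk nr ns nt f k (2 + i)" using 2 by simp
      also have "\<dots> = fwr nt (bn0 nr ns) f (3 + i + (k-1)*bn0 nr ns)
          - (\<Sum>l=1..3. Ebar2 nr l i * fwr nt (bn0 nr ns) f (l + (k-1)*bn0 nr ns))"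
        by (rule R3) (use assms in auto)
      also have "(\<Sum>l=1..3. Ebar2 nr l i * fwr nt (bn0 nr ns) f (l + (k-1)*bn0 nr ns)) = (\<Sum>l=1..3. Ebar2 nr l i * \<phi> l)"
        by (rule sum.cong[OF refl]) (use fw b0ge in \<open>auto simp: b0_def\<close>)
      also have "fwr nt (bn0 nr ns) f (3 + i + (k-1)*bn0 nr ns) = \<phi> (3 + i)"
        using fw[of "3+i"] xb[of 0] assms unfolding b0_def by simp
      finally show ?thesis .
    qed
    show ?thesis unfolding u_def[symmetric] L R Unext Ucur B using 2 by simp
  next
    case 3
    have B: "blk nr ns nt f k (2 + i + (2*j-4)*nr) = \<phi> (3 + i + (j-2)*nr) - \<phi> (3 + i + (j-3)*nr)"
      using R5[of ns i nr j nt f k] fw[OF xb[of "j-2"]] fw[OF xb[of "j-3"]] assms 3 by (simp add: b0_def)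
    show ?thesis unfolding u_def[symmetric] L R Unext Ucur B using 3 by simp
  qed
qed


lemma partC: assumes "nr \<ge> 2" "ns \<ge> 3" "nt \<ge> 2" "1 \<le> k" "k \<le> nt" "1 \<le> i" "i \<le> nr" "1 \<le> j" "j \<le> ns"
  shows "mat_vec (nt*ns*nr) (D001 nr ns nt) (tmat_vec (n0 nr ns nt) (E000 nr ns) f) ((k-1)*(nr*ns) + ((j-1)*nr + i))
    = tmat_vec (n1 nr ns nt) (E001 nr ns) (D0 nr ns nt f) ((k-1)*(nr*ns) + ((j-1)*nr + i))"
proof -
  define u where "u = tmat_vec (n0 nr ns nt) (E000 nr ns) f"
  define b0 where "b0 = bn0 nr ns"
  define c where "c = (j-1)*nr + i"
  have c: "1 \<le> c" "c \<le> nr*ns" unfolding c_def using assms c_le[of i nr j ns] by auto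
  have UG: "\<And>k'. 1 \<le> k' \<Longrightarrow> k' \<le> nt \<Longrightarrow> u ((k'-1)*(nr*ns) + c) = (\<Sum>a=1..b0. E0 nr a c * f((k'-1)*b0 + a))"
    unfolding u_def b0_def by (rule U_gen) (use c in auto)
  define F1 where "F1 = (\<lambda>a. if k < nt then f(k*b0 + a) else f a)"
  have L: "mat_vec (nt*ns*nr) (D001 nr ns nt) u ((k-1)*(nr*ns) + c)
      = (\<Sum>a=1..b0. E0 nr a c * F1 a) - (\<Sum>a=1..b0. E0 nr a c * f((k-1)*b0 + a))"
  proof -
    have "mat_vec (nt*ns*nr) (D001 nr ns nt) u ((k-1)*(nr*ns) + c)
      = (if k < nt then u(k*(nr*ns) + c) else u c) - u((k-1)*(nr*ns) + c)"
      unfolding c_def by (rule lhs_c) (use assms in auto)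
    moreover have "(if k < nt then u(k*(nr*ns) + c) else u c) = (\<Sum>a=1..b0. E0 nr a c * F1 a)"
    proof (cases "k < nt")
      case True thus ?thesis using UG[of "k+1"] unfolding F1_def by simp
    next
      case False thus ?thesis using UG[of 1] assms unfolding F1_def by simp
    qed
    ultimately show ?thesis using UG[of k] assms by simp
  qed
  have R: "tmat_vec (n1 nr ns nt) (E001 nr ns) (D0 nr ns nt f) ((k-1)*(nr*ns) + c)
      = (\<Sum>a=1..b0. E0 nr a c * (F1 a - f((k-1)*b0 + a)))"
  proof -
    have "tmat_vec (n1 nr ns nt) (E001 nr ns) (D0 nr ns nt f) ((k-1)*(nr*ns) + c)
      = (\<Sum>a=1..bn0 nr ns. E0 nr a c * (fwr nt (bn0 nr ns) f (a + k*bn0 nr ns) - fwr nt (bn0 nr ns) f (a + (k-1)*bn0 nr ns)))"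
      by (rule rhs_c) (use assms c in auto)
    also have "\<dots> = (\<Sum>a=1..b0. E0 nr a c * (F1 a - f((k-1)*b0 + a)))"
      unfolding b0_def[symmetric]
    proof (rule sum.cong[OF refl])
      fix a assume a: "a \<in> {1..b0}"
      have "fwr nt b0 f (a + (k-1)*b0) = f((k-1)*b0 + a)"
        using idx_ok[of a b0 k nt] a assms by (simp add: fwr_in add.commute)
      moreover have "fwr nt b0 f (a + k*b0) = F1 a"
      proof (cases "k < nt")
        case True
        have "a + k*b0 \<le> nt*b0" using idx_ok[of a b0 "k+1" nt] a True by simp
        thus ?thesis using True unfolding F1_def by (simp add: fwr_in add.commute)
      next
        case False
        hence "k = nt" using assms by simp
        thus ?thesis using False a unfolding F1_def by (simp add: fwr_out)
      qed
      ultimately show "E0 nr a c * (fwr nt b0 f (a + k*b0) - fwr nt b0 f (a + (k-1)*b0)) = E0 nr a c * (F1 a - f((k-1)*b0 + a))"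
        by simp
    qed
    finally show ?thesis .
  qed
  show ?thesis unfolding u_def[symmetric] c_def[symmetric] L R
    by (simp add: right_diff_distrib sum_subtractf)
qed

theorem proposition3p1:
  fixes nr ns nt :: nat and f :: "nat \<Rightarrow> real"
  assumes "nr \<ge> 2" and "ns \<ge> 3" and "nt \<ge> 2"
  shows "(\<forall>j\<in>{1..nt * ns * nr}.
            mat_vec (nt * ns * nr) (D100 nr ns) (tmat_vec (n0 nr ns nt) (E000 nr ns) f) j
          = tmat_vec (n1 nr ns nt) (E100 nr ns) (D0 nr ns nt f) j)
       \<and> (\<forall>j\<in>{1..nt * (ns - 1) * nr}.
            mat_vec (nt * ns * nr) (D010 nr ns) (tmat_vec (n0 nr ns nt) (E000 nr ns) f) j
          = tmat_vec (n1 nr ns nt) (E010 nr ns) (D0 nr ns nt f) j)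
       \<and> (\<forall>j\<in>{1..nt * ns * nr}.
            mat_vec (nt * ns * nr) (D001 nr ns nt) (tmat_vec (n0 nr ns nt) (E000 nr ns) f) j
          = tmat_vec (n1 nr ns nt) (E001 nr ns) (D0 nr ns nt f) j)"
proof (intro conjI ballI)
  fix J assume J: "J \<in> {1..nt * ns * nr}"
  hence "J \<in> {1..nt * (nr*ns)}" by (simp add: mult.commute mult.left_commute)
  then obtain k c where kc: "1 \<le> k" "k \<le> nt" "1 \<le> c" "c \<le> nr*ns" "J = (k-1)*(nr*ns) + c"
    using decomp by blast
  have "c \<in> {1..ns*nr}" using kc by (simp add: mult.commute)
  then obtain j i where ji: "1 \<le> j" "j \<le> ns" "1 \<le> i" "i \<le> nr" "c = (j-1)*nr + i"
    using decomp by blast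
  show "mat_vec (nt * ns * nr) (D100 nr ns) (tmat_vec (n0 nr ns nt) (E000 nr ns) f) J
          = tmat_vec (n1 nr ns nt) (E100 nr ns) (D0 nr ns nt f) J"
    unfolding kc(5) ji(5) by (rule partA) (use assms kc ji in auto)
  show "mat_vec (nt * ns * nr) (D001 nr ns nt) (tmat_vec (n0 nr ns nt) (E000 nr ns) f) J
          = tmat_vec (n1 nr ns nt) (E001 nr ns) (D0 nr ns nt f) J"
    unfolding kc(5) ji(5) by (rule partC) (use assms kc ji in auto)
next
  fix J assume J: "J \<in> {1..nt * (ns - 1) * nr}"
  hence "J \<in> {1..nt * (nr*(ns-1))}" by (simp add: mult.commute mult.left_commute)
  then obtain k c where kc: "1 \<le> k" "k \<le> nt" "1 \<le> c" "c \<le> nr*(ns-1)" "J = (k-1)*(nr*(ns-1)) + c"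
    using decomp by blast
  have "c \<in> {1..(ns-1)*nr}" using kc by (simp add: mult.commute)
  then obtain j i where ji: "1 \<le> j" "j \<le> ns-1" "1 \<le> i" "i \<le> nr" "c = (j-1)*nr + i"
    using decomp by blast
  show "mat_vec (nt * ns * nr) (D010 nr ns) (tmat_vec (n0 nr ns nt) (E000 nr ns) f) J
          = tmat_vec (n1 nr ns nt) (E010 nr ns) (D0 nr ns nt f) J"
    unfolding kc(5) ji(5) by (rule partB) (use assms kc ji in auto)
qed



end
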